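(* Under the assumption $\det[K^\pm(\omega)-\omega]\neq0$ for all $\omega>0$, for every integer $r\ge0$ the matrix function $\tilde R^\pm(\omega)$ is $r$ times differentiable on $(0,\infty)$ and $\frac{d^r\tilde R^\pm(\omega)}{d\omega^r}=O(\omega^{-r-1})$ as $\omega\to\infty$.
   Context: Let $N\ge 1$ and $\mathcal H=\mathbb C^N\oplus L^2((0,\infty))$, where $|1\rangle,\dots,|N\rangle$ is the standard orthonormal basis of $\mathbb C^N$. Let $\omega_1\le\dots\le\omega_N$ be real, $\lambda\in\mathbb R$, $v_1,\dots,v_N\in L^2((0,\infty))$. The Hamiltonian is $H=H_0+\lambda V$ with $H_0(|c\rangle+|f\rangle)=\sum_n\omega_nc_n|n\rangle+\omega f(\omega)$ on $D(H_0)=\{|c\rangle+|f\rangle:\int_0^\infty|\omega f(\omega)|^2d\omega<\infty\}$ and $V(|c\rangle+|f\rangle)=\sum_n\langle v_n|f\rangle|n\rangle+\sum_n c_n v_n$. Form-factor assumption: for all $m,n$, $v_m^*(\omega)v_n(\omega)=\pi_{mn}(\omega)/\rho_{mn}(\omega)$ with polynomials such that $\deg\rho_{mn}\ge\deg\pi_{mn}+2$, $\rho_{mn}$ has no zeros in $[0,\infty)$, $\pi_{mn}(0)=0$; $\Gamma(\omega)$ is the matrix with entries $v_m^*(\omega)v_n(\omega)$. The reduced resolvent $\tilde R(z)$ is the matrix with entries $\langle m|(H-z)^{-1}|n\rangle$. Let $K_0=\mathrm{diag}(\omega_1,\dots,\omega_N)$; for $\omega>0$, $D_{mn}(\omega)=P\!\int_0^\infty\frac{v_m^*(\omega')v_n(\omega')}{\omega'-\omega}d\omega'$,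 $K^\pm(\omega)=K_0-\lambda^2D(\omega)\mp i\pi\lambda^2\Gamma(\omega)$, and $\tilde R^\pm(\omega)=\lim_{\epsilon\to+0}\tilde R(\omega\pm i\epsilon)$, which under the stated assumption exists and equals $[K^\pm(\omega)-\omega]^{-1}$. *)

theory Defs
  imports "HOL-Analysis.Analysis" "HOL-Computational_Algebra.Polynomial"
begin

definition pv_integral :: "(real \<Rightarrow> complex) \<Rightarrow> real \<Rightarrow> complex" where
  "pv_integral f w = Lim (at_right 0)
     (\<lambda>e. integral ({0<..<w - e} \<union> {w + e<..}) (\<lambda>x. f x / complex_of_real (x - w)))"

definition Gam :: "('n::finite \<Rightarrow> real \<Rightarrow> complex) \<Rightarrow> real \<Rightarrow> complex^'n^'n" where
  "Gam v w = (\<chi> m n. cnj (v m w) * v n w)"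

definition Dmat :: "('n::finite \<Rightarrow> real \<Rightarrow> complex) \<Rightarrow> real \<Rightarrow> complex^'n^'n" where
  "Dmat v w = (\<chi> m n. pv_integral (\<lambda>x. cnj (v m x) * v n x) w)"

(* K^\<pm>(w) = K_0 - \<lambda>^2 D(w) \<mp> i \<pi> \<lambda>^2 \<Gamma>(w);  s = 1 gives K^+, s = -1 gives K^- *)
definition Kpm :: "real \<Rightarrow> ('n::finite \<Rightarrow> real) \<Rightarrow> real \<Rightarrow> ('n \<Rightarrow> real \<Rightarrow> complex)
                   \<Rightarrow> real \<Rightarrow> complex^'n^'n" where
  "Kpm s om lam v w = (\<chi> m n.
      (if m = n then complex_of_real (om m) else 0)
      - complex_of_real (lam^2) * (Dmat v w $ m $ n)
      - complex_of_real s * \<i> * complex_of_real (pi * lam^2) * (Gam v w $ m $ n))"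

definition Rpm :: "real \<Rightarrow> ('n::finite \<Rightarrow> real) \<Rightarrow> real \<Rightarrow> ('n \<Rightarrow> real \<Rightarrow> complex)
                   \<Rightarrow> real \<Rightarrow> complex^'n^'n" where
  "Rpm s om lam v w = matrix_inv (Kpm s om lam v w - mat (complex_of_real w))"

fun nth_vderiv :: "nat \<Rightarrow> (real \<Rightarrow> 'a::real_normed_vector) \<Rightarrow> real \<Rightarrow> 'a" where
  "nth_vderiv 0 f = f"
| "nth_vderiv (Suc k) f = (\<lambda>x. vector_derivative (nth_vderiv k f) (at x))"

end

theory Submission
  imports Defs
begin

definition bnd :: "real \<Rightarrow> (real \<Rightarrow> 'a::real_normed_vector) \<Rightarrow> bool" where
  "bnd m F \<longleftrightarrow> (\<exists>C W. \<forall>x\<ge>W. norm (F x) \<le> C * x powr m)"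

fun Sy :: "nat \<Rightarrow> real \<Rightarrow> (real \<Rightarrow> 'a::real_normed_vector) \<Rightarrow> bool" where
  "Sy 0 m F = bnd m F"
| "Sy (Suc j) m F = (bnd m F \<and> (\<forall>x>0. F differentiable (at x))
      \<and> Sy j (m - 1) (\<lambda>x. vector_derivative F (at x)))"

lemma bndI: assumes "\<And>x. x \<ge> W \<Longrightarrow> norm (F x) \<le> C * x powr m" shows "bnd m F"
  using assms unfolding bnd_def by blast

lemma bndE':
  assumes "bnd m F"
  obtains C W where "C \<ge> 0" "W \<ge> 1" "\<And>x. x \<ge> W \<Longrightarrow> norm (F x) \<le> C * x powr m"
proof -
  obtain C W where h: "\<And>x. x \<ge> W \<Longrightarrow> norm (F x) \<le> C * x powr m"
    using assms unfolding bnd_def by blast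
  show ?thesis
  proof (rule that[of "max C 0" "max W 1"])
    fix x assume x: "x \<ge> max W 1"
    have "norm (F x) \<le> C * x powr m" using h x by auto
    also have "\<dots> \<le> max C 0 * x powr m" by (intro mult_right_mono) auto
    finally show "norm (F x) \<le> max C 0 * x powr m" .
  qed auto
qed

lemma bnd_mono: assumes "bnd m F" "m \<le> m'" shows "bnd m' F"
proof -
  obtain C W where C: "C \<ge> 0" "W \<ge> 1" "\<And>x. x \<ge> W \<Longrightarrow> norm (F x) \<le> C * x powr m"
    using bndE'[OF assms(1)] by metis
  show ?thesis
  proof (rule bndI[of W])
    fix x assume x: "x \<ge> W"
    have "norm (F x) \<le> C * x powr m" using C x by auto
    also have "\<dots> \<le> C * x powr m'" using C x assms(2) by (intro mult_left_mono powr_mono) auto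
    finally show "norm (F x) \<le> C * x powr m'" .
  qed
qed

lemma bnd_cong: assumes "bnd m F" "\<And>x. x > 0 \<Longrightarrow> F x = G x" shows "bnd m G"
proof -
  obtain C W where C: "C \<ge> 0" "W \<ge> 1" "\<And>x. x \<ge> W \<Longrightarrow> norm (F x) \<le> C * x powr m"
    using bndE'[OF assms(1)] by metis
  show ?thesis by (rule bndI[of W]) (use C assms(2) in auto)
qed

lemma bnd_add: assumes "bnd m F" "bnd m G" shows "bnd m (\<lambda>x. F x + G x)"
proof -
  obtain C W where C: "C \<ge> 0" "W \<ge> 1" "\<And>x. x \<ge> W \<Longrightarrow> norm (F x) \<le> C * x powr m"
    using bndE'[OF assms(1)] by metis
  obtain C' W' where C': "C' \<ge> 0" "W' \<ge> 1" "\<And>x. x \<ge> W' \<Longrightarrow> norm (G x) \<le> C' * x powr m"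
    using bndE'[OF assms(2)] by metis
  show ?thesis
  proof (rule bndI[of "max W W'"])
    fix x assume x: "x \<ge> max W W'"
    have "norm (F x + G x) \<le> norm (F x) + norm (G x)" by (rule norm_triangle_ineq)
    also have "\<dots> \<le> C * x powr m + C' * x powr m" using C C' x by (intro add_mono) auto
    finally show "norm (F x + G x) \<le> (C + C') * x powr m" by (simp add: algebra_simps)
  qed
qed

lemma bnd_linear: assumes "bnd m F" "bounded_linear L" shows "bnd m (\<lambda>x. L (F x))"
proof -
  obtain C W where C: "C \<ge> 0" "W \<ge> 1" "\<And>x. x \<ge> W \<Longrightarrow> norm (F x) \<le> C * x powr m"
    using bndE'[OF assms(1)] by metis
  obtain K where K: "\<And>y. norm (L y) \<le> norm y * K" "K > 0"
    using bounded_linear.pos_bounded[OF assms(2)] by blast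
  show ?thesis
  proof (rule bndI[of W])
    fix x assume x: "x \<ge> W"
    have "norm (L (F x)) \<le> norm (F x) * K" by (rule K)
    also have "\<dots> \<le> (C * x powr m) * K" using C x K by (intro mult_right_mono) auto
    finally show "norm (L (F x)) \<le> (C * K) * x powr m" by (simp add: algebra_simps)
  qed
qed

lemma bnd_bilinear: assumes "bnd m F" "bnd n G" "bounded_bilinear B"
  shows "bnd (m + n) (\<lambda>x. B (F x) (G x))"
proof -
  obtain C W where C: "C \<ge> 0" "W \<ge> 1" "\<And>x. x \<ge> W \<Longrightarrow> norm (F x) \<le> C * x powr m"
    using bndE'[OF assms(1)] by metis
  obtain C' W' where C': "C' \<ge> 0" "W' \<ge> 1" "\<And>x. x \<ge> W' \<Longrightarrow> norm (G x) \<le> C' * x powr n"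
    using bndE'[OF assms(2)] by metis
  obtain K where K: "\<And>a b. norm (B a b) \<le> norm a * norm b * K" "K > 0"
    using bounded_bilinear.pos_bounded[OF assms(3)] by blast
  show ?thesis
  proof (rule bndI[of "max W W'"])
    fix x assume x: "x \<ge> max W W'"
    have "norm (B (F x) (G x)) \<le> norm (F x) * norm (G x) * K" by (rule K)
    also have "\<dots> \<le> (C * x powr m) * (C' * x powr n) * K" using C C' x K
      by (intro mult_right_mono mult_mono) auto
    also have "\<dots> = (C * C' * K) * x powr (m + n)" using x C by (simp add: powr_add algebra_simps)
    finally show "norm (B (F x) (G x)) \<le> (C * C' * K) * x powr (m + n)" .
  qed
qed

lemma bnd_const: "bnd 0 (\<lambda>x. c)"
  by (rule bndI[of 1, where C="norm c"]) auto

lemma bnd_zero: "bnd m (\<lambda>x. 0)"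
  by (rule bndI[of 1, where C=0]) auto

lemma Sy_down: "Sy (Suc j) m F \<Longrightarrow> Sy j m F"
proof (induction j arbitrary: m F)
  case 0 then show ?case by simp
next
  case (Suc j) then show ?case by auto
qed

lemma Sy_bnd: "Sy j m F \<Longrightarrow> bnd m F"
  by (cases j) auto

lemma Sy_mono: "Sy j m F \<Longrightarrow> m \<le> m' \<Longrightarrow> Sy j m' F"
proof (induction j arbitrary: m m' F)
  case 0 then show ?case using bnd_mono by auto
next
  case (Suc j) then show ?case using bnd_mono by (auto)
qed

lemma vderiv_cong_pos:
  fixes F G :: "real \<Rightarrow> 'b::real_normed_vector"
  assumes "\<And>x. x > 0 \<Longrightarrow> F x = G x" "x > 0"
  shows "vector_derivative F (at x) = vector_derivative G (at x)"
proof -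
  have "eventually (\<lambda>y. y \<in> {0<..}) (nhds x)"
    by (rule eventually_nhds_in_open) (use assms in auto)
  then have "eventually (\<lambda>y. y \<in> UNIV \<longrightarrow> F y = G y) (nhds x)"
    by eventually_elim (use assms in auto)
  then show ?thesis by (rule vector_derivative_cong_eq) auto
qed

lemma differentiable_cong_pos:
  fixes F G :: "real \<Rightarrow> 'b::real_normed_vector"
  assumes "\<And>x. x > 0 \<Longrightarrow> F x = G x" "x > 0" "F differentiable (at x)"
  shows "G differentiable (at x)"
proof -
  obtain D where "(F has_derivative D) (at x)" using assms(3) unfolding differentiable_def by blast
  then have "(G has_derivative D) (at x)"
    by (rule has_derivative_transform_within_open[where s="{0<..}"]) (use assms in \<open>auto simp: open_greaterThan\<close>)
  then show ?thesis unfolding differentiable_def by blast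
qed

lemma Sy_cong: "Sy j m F \<Longrightarrow> (\<And>x. x > 0 \<Longrightarrow> F x = G x) \<Longrightarrow> Sy j m G"
proof (induction j arbitrary: m F G)
  case 0 then show ?case using bnd_cong by auto
next
  case (Suc j)
  have "Sy j (m - 1) (\<lambda>x. vector_derivative G (at x))"
    using Suc.IH[of "m-1" "\<lambda>x. vector_derivative F (at x)"] Suc.prems vderiv_cong_pos[of F G]
    by auto
  then show ?case using Suc.prems bnd_cong[of m F G] differentiable_cong_pos[of F G] by auto
qed

lemma Sy_add: "Sy j m F \<Longrightarrow> Sy j m G \<Longrightarrow> Sy j m (\<lambda>x. F x + G x)"
proof (induction j arbitrary: m F G)
  case 0 then show ?case using bnd_add by auto
next
  case (Suc j)
  have d: "vector_derivative (\<lambda>x. F x + G x) (at x) =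
        vector_derivative F (at x) + vector_derivative G (at x)" if "x > 0" for x
    using Suc.prems that
    by (intro vector_derivative_at has_vector_derivative_add)
       (auto simp: vector_derivative_works[symmetric])
  have "Sy j (m - 1) (\<lambda>x. vector_derivative F (at x) + vector_derivative G (at x))"
    using Suc by auto
  then have "Sy j (m - 1) (\<lambda>x. vector_derivative (\<lambda>x. F x + G x) (at x))"
    by (rule Sy_cong) (use d in auto)
  then show ?case using Suc.prems bnd_add by auto
qed

lemma Sy_linear: "Sy j m F \<Longrightarrow> bounded_linear L \<Longrightarrow> Sy j m (\<lambda>x. L (F x))"
proof (induction j arbitrary: m F)
  case 0 then show ?case using bnd_linear by auto
next
  case (Suc j)
  have hd: "((\<lambda>x. L (F x)) has_vector_derivative L (vector_derivative F (at x))) (at x)" if "x > 0" for x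
  proof -
    have "(F has_vector_derivative vector_derivative F (at x)) (at x)"
      using Suc.prems that by (auto simp: vector_derivative_works[symmetric])
    then show ?thesis
      using Suc.prems(2) bounded_linear.has_vector_derivative by blast
  qed
  have d: "vector_derivative (\<lambda>x. L (F x)) (at x) = L (vector_derivative F (at x))" if "x > 0" for x
    using hd[OF that] by (rule vector_derivative_at)
  have "Sy j (m - 1) (\<lambda>x. L (vector_derivative F (at x)))"
    using Suc by auto
  then have "Sy j (m - 1) (\<lambda>x. vector_derivative (\<lambda>x. L (F x)) (at x))"
    by (rule Sy_cong) (use d in auto)
  moreover have "(\<lambda>x. L (F x)) differentiable (at x)" if "x > 0" for x
    using hd[OF that] differentiableI_vector by blast
  ultimately show ?case using Suc.prems bnd_linear by auto
qed

lemma Sy_bilinear: "Sy j m F \<Longrightarrow> Sy j n G \<Longrightarrow> bounded_bilinear B \<Longrightarrow>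
    Sy j (m + n) (\<lambda>x. B (F x) (G x))"
proof (induction j arbitrary: m n F G)
  case 0 then show ?case using bnd_bilinear by auto
next
  case (Suc j)
  let ?F' = "\<lambda>x. vector_derivative F (at x)"
  let ?G' = "\<lambda>x. vector_derivative G (at x)"
  have hd: "((\<lambda>x. B (F x) (G x)) has_vector_derivative (B (F x) (?G' x) + B (?F' x) (G x))) (at x)"
    if "x > 0" for x
  proof -
    have "(F has_vector_derivative ?F' x) (at x)" "(G has_vector_derivative ?G' x) (at x)"
      using Suc.prems that by (auto simp: vector_derivative_works[symmetric])
    then show ?thesis using bounded_bilinear.has_vector_derivative[OF Suc.prems(3)] by blast
  qed
  have d: "vector_derivative (\<lambda>x. B (F x) (G x)) (at x) = B (F x) (?G' x) + B (?F' x) (G x)"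
    if "x > 0" for x using hd[OF that] by (rule vector_derivative_at)
  have s1: "Sy j (m + (n - 1)) (\<lambda>x. B (F x) (?G' x))"
    using Suc.IH[of m F "n - 1" ?G'] Suc.prems Sy_down[of j m F] by auto
  have s2: "Sy j ((m - 1) + n) (\<lambda>x. B (?F' x) (G x))"
    using Suc.IH[of "m - 1" ?F' n G] Suc.prems Sy_down[of j n G] by auto
  have e1: "m + (n - 1) = m + n - 1" "(m - 1) + n = m + n - 1" by simp_all
  have "Sy j (m + n - 1) (\<lambda>x. B (F x) (?G' x) + B (?F' x) (G x))"
    using Sy_add[OF s1[unfolded e1] s2[unfolded e1]] .
  then have "Sy j (m + n - 1) (\<lambda>x. vector_derivative (\<lambda>x. B (F x) (G x)) (at x))"
    by (rule Sy_cong) (use d in auto)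
  moreover have "(\<lambda>x. B (F x) (G x)) differentiable (at x)" if "x > 0" for x
    using hd[OF that] differentiableI_vector by blast
  ultimately show ?case using Suc.prems bnd_bilinear by auto
qed

lemma Sy_zero: "Sy j m (\<lambda>x. 0)"
proof (induction j arbitrary: m)
  case 0 then show ?case by (simp add: bnd_zero)
next
  case (Suc j)
  have "vector_derivative (\<lambda>x. 0::'a) (at x) = 0" for x
    by (rule vector_derivative_at) (rule has_vector_derivative_const)
  then show ?case using Suc bnd_zero by auto
qed

lemma Sy_const: "Sy j 0 (\<lambda>x. c)"
proof (cases j)
  case 0 then show ?thesis by (simp add: bnd_const)
next
  case (Suc k)
  have "vector_derivative (\<lambda>x. c) (at x) = 0" for x
    by (rule vector_derivative_at) (rule has_vector_derivative_const)
  then show ?thesis using Suc bnd_const Sy_zero by auto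
qed

lemma Sy_sum: "finite I \<Longrightarrow> (\<And>i. i \<in> I \<Longrightarrow> Sy j m (F i)) \<Longrightarrow> Sy j m (\<lambda>x. \<Sum>i\<in>I. F i x)"
proof (induction I rule: finite_induct)
  case empty then show ?case using Sy_zero by simp
next
  case (insert a I)
  then show ?case using Sy_add[of j m "F a" "\<lambda>x. \<Sum>i\<in>I. F i x"] by simp
qed

lemma Sy_id: "Sy j 1 (\<lambda>x::real. x)"
proof (cases j)
  case 0 then show ?thesis by (auto intro!: bndI[of 1, where C=1])
next
  case (Suc k)
  have "vector_derivative (\<lambda>x::real. x) (at x) = 1" for x
    by (rule vector_derivative_at) (auto intro!: derivative_eq_intros)
  then show ?thesis using Suc Sy_const[of k 1] by (auto intro!: bndI[of 1, where C=1])
qed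

definition rat :: "complex poly \<Rightarrow> complex poly \<Rightarrow> real \<Rightarrow> complex" where
  "rat p q x = poly p (of_real x) / poly q (of_real x)"

definition dnum :: "complex poly \<Rightarrow> complex poly \<Rightarrow> complex poly" where
  "dnum p q = pderiv p * q - p * pderiv q"

lemma poly_lim:
  fixes p :: "complex poly"
  shows "((\<lambda>x. poly p (of_real x) / of_real x ^ degree p) \<longlongrightarrow> lead_coeff p) at_top"
proof -
  let ?d = "degree p"
  have ev: "eventually (\<lambda>x. (\<Sum>i\<le>?d. coeff p i * of_real (inverse x ^ (?d - i)))
            = poly p (of_real x) / of_real x ^ degree p) at_top"
    using eventually_gt_at_top[of "0::real"]
  proof eventually_elim
    case (elim x)
    have "poly p (of_real x) / of_real x ^ ?d = (\<Sum>i\<le>?d. coeff p i * of_real x ^ i / of_real x ^ ?d)"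
      by (simp add: poly_altdef sum_divide_distrib)
    also have "\<dots> = (\<Sum>i\<le>?d. coeff p i * of_real (inverse x ^ (?d - i)))"
    proof (rule sum.cong)
      fix i assume "i \<in> {..?d}"
      then have "i \<le> ?d" by auto
      then have "(of_real x :: complex) ^ ?d = of_real x ^ i * of_real x ^ (?d - i)"
        by (simp add: power_add[symmetric])
      then show "coeff p i * of_real x ^ i / of_real x ^ ?d = coeff p i * of_real (inverse x ^ (?d - i))"
        using elim by (simp add: field_simps power_inverse)
    qed simp
    finally show ?case by simp
  qed
  have "((\<lambda>x. (\<Sum>i\<le>?d. coeff p i * of_real (inverse x ^ (?d - i)))) \<longlongrightarrow>
        (\<Sum>i\<le>?d. coeff p i * of_real (0 ^ (?d - i)))) at_top"
    by (intro tendsto_intros tendsto_inverse_0_at_top filterlim_ident)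
  also have "(\<Sum>i\<le>?d. coeff p i * of_real (0 ^ (?d - i))) = (\<Sum>i\<in>{?d}. coeff p i)"
    by (rule sum.mono_neutral_cong_right) auto
  finally show ?thesis using ev by (simp add: tendsto_cong)
qed

lemma poly_upper:
  fixes p :: "complex poly"
  obtains C W where "W \<ge> 1" "\<And>x. x \<ge> W \<Longrightarrow> norm (poly p (of_real x)) \<le> C * x ^ degree p"
proof -
  have "eventually (\<lambda>x. dist (poly p (of_real x) / of_real x ^ degree p) (lead_coeff p) < 1) at_top"
    using poly_lim[of p] by (rule tendstoD) simp
  then obtain W where W: "\<And>x. x \<ge> W \<Longrightarrow> dist (poly p (of_real x) / of_real x ^ degree p) (lead_coeff p) < 1"
    unfolding eventually_at_top_linorder by blast
  show ?thesis
  proof (rule that[of "max W 1" "norm (lead_coeff p) + 1"])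
    fix x assume x: "x \<ge> max W 1"
    define P where "P = poly p (of_real x)"
    define X where "X = (of_real x :: complex) ^ degree p"
    have X0: "X \<noteq> 0" using x by (simp add: X_def)
    have nX: "norm X = x ^ degree p" using x by (simp add: X_def norm_power)
    have "dist (P / X) (lead_coeff p) < 1" using W[of x] x by (simp add: P_def X_def)
    moreover have "norm (P / X) - norm (lead_coeff p) \<le> norm (P / X - lead_coeff p)"
      by (rule norm_triangle_ineq2)
    ultimately have a: "norm (P / X) \<le> norm (lead_coeff p) + 1" by (simp add: dist_norm)
    have "P = (P / X) * X" using X0 by simp
    then have "norm P = norm (P / X) * norm X" by (metis norm_mult)
    also have "\<dots> \<le> (norm (lead_coeff p) + 1) * norm X" by (rule mult_right_mono[OF a]) simp
    finally show "norm (poly p (of_real x)) \<le> (norm (lead_coeff p) + 1) * x ^ degree p"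
      by (simp add: P_def nX)
  qed auto
qed

lemma poly_lower:
  fixes q :: "complex poly"
  assumes "q \<noteq> 0"
  obtains c W where "c > 0" "W \<ge> 1" "\<And>x. x \<ge> W \<Longrightarrow> norm (poly q (of_real x)) \<ge> c * x ^ degree q"
proof -
  let ?l = "lead_coeff q"
  have l: "norm ?l > 0" using assms by simp
  have "eventually (\<lambda>x. dist (poly q (of_real x) / of_real x ^ degree q) ?l < norm ?l / 2) at_top"
    using poly_lim[of q] by (rule tendstoD) (use l in simp)
  then obtain W where W: "\<And>x. x \<ge> W \<Longrightarrow> dist (poly q (of_real x) / of_real x ^ degree q) ?l < norm ?l / 2"
    unfolding eventually_at_top_linorder by blast
  show ?thesis
  proof (rule that[of "norm ?l / 2" "max W 1"])
    fix x assume x: "x \<ge> max W 1"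
    define P where "P = poly q (of_real x)"
    define X where "X = (of_real x :: complex) ^ degree q"
    have X0: "X \<noteq> 0" using x by (simp add: X_def)
    have nX: "norm X = x ^ degree q" using x by (simp add: X_def norm_power)
    have "dist (P / X) ?l < norm ?l / 2" using W[of x] x by (simp add: P_def X_def)
    moreover have "norm ?l - norm (P / X) \<le> norm (?l - P / X)"
      by (rule norm_triangle_ineq2)
    moreover have "norm (?l - P / X) = dist (P / X) ?l" by (simp add: dist_norm norm_minus_commute)
    ultimately have a: "norm ?l / 2 \<le> norm (P / X)" by linarith
    have "P = (P / X) * X" using X0 by simp
    then have "norm P = norm (P / X) * norm X" by (metis norm_mult)
    moreover have "norm ?l / 2 * norm X \<le> norm (P / X) * norm X" by (rule mult_right_mono[OF a]) simp
    ultimately show "norm (poly q (of_real x)) \<ge> norm ?l / 2 * x ^ degree q"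
      by (simp add: P_def nX)
  qed (use l in auto)
qed

lemma rat_bnd:
  assumes q: "\<And>x. x > 0 \<Longrightarrow> poly q (of_real x) \<noteq> 0"
    and d: "p = 0 \<or> real (degree p) \<le> real (degree q) + m"
  shows "bnd m (rat p q)"
proof (cases "p = 0")
  case True
  then have "rat p q = (\<lambda>x. 0)" by (simp add: rat_def[abs_def])
  then show ?thesis by (simp add: bnd_zero)
next
  case False
  have q0: "q \<noteq> 0" using q[of 1] by auto
  obtain C W where W: "W \<ge> 1" "\<And>x. x \<ge> W \<Longrightarrow> norm (poly p (of_real x)) \<le> C * x ^ degree p"
    using poly_upper by metis
  obtain c W' where W': "c > 0" "W' \<ge> 1" "\<And>x. x \<ge> W' \<Longrightarrow> norm (poly q (of_real x)) \<ge> c * x ^ degree q"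
    using poly_lower[OF q0] by metis
  have C: "C \<ge> 0"
  proof -
    have "0 \<le> C * W ^ degree p" using order_trans[OF norm_ge_zero W(2)[of W]] W(1) by simp
    moreover have "W ^ degree p > 0" using W(1) by simp
    ultimately show ?thesis by (simp add: zero_le_mult_iff)
  qed
  show ?thesis
  proof (rule bndI[of "max W W'"])
    fix x assume x: "x \<ge> max W W'"
    have x1: "x \<ge> 1" using x W by auto
    have "norm (rat p q x) = norm (poly p (of_real x)) / norm (poly q (of_real x))"
      by (simp add: rat_def norm_divide)
    also have "\<dots> \<le> (C * x ^ degree p) / (c * x ^ degree q)"
      using W(2)[of x] W'(3)[of x] W'(1) x x1 C by (intro frac_le) auto
    also have "\<dots> = (C / c) * x powr (real (degree p) - real (degree q))"
      using x1 by (simp add: powr_diff powr_realpow)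
    also have "\<dots> \<le> (C / c) * x powr m"
      using d False x1 C W'(1) by (intro mult_left_mono powr_mono) auto
    finally show "norm (rat p q x) \<le> (C / c) * x powr m" .
  qed
qed

lemma rat_deriv:
  assumes "poly q (of_real x) \<noteq> 0"
  shows "(rat p q has_vector_derivative rat (dnum p q) (q * q) x) (at x within S)"
proof -
  have "((\<lambda>z. poly p z / poly q z) has_field_derivative
        (poly (pderiv p) (of_real x) * poly q (of_real x) - poly p (of_real x) * poly (pderiv q) (of_real x))
         / (poly q (of_real x) * poly q (of_real x))) (at (of_real x))"
    using assms by (auto intro!: derivative_eq_intros simp: power2_eq_square)
  then have "((\<lambda>x. poly p (of_real x) / poly q (of_real x)) has_vector_derivative
        (poly (pderiv p) (of_real x) * poly q (of_real x) - poly p (of_real x) * poly (pderiv q) (of_real x))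
         / (poly q (of_real x) * poly q (of_real x))) (at x within S)"
    by (rule has_vector_derivative_real_field)
  then show ?thesis by (simp add: rat_def[abs_def] dnum_def)
qed

lemma dnum_degree:
  fixes p q :: "complex poly"
  assumes "q \<noteq> 0" "dnum p q \<noteq> 0"
  shows "degree (dnum p q) + 1 \<le> degree p + degree q"
proof -
  have nz: "degree p + degree q \<ge> 1"
  proof (rule ccontr)
    assume "\<not> ?thesis"
    then have "degree p = 0" "degree q = 0" by auto
    then have "pderiv p = 0" "pderiv q = 0" by (auto simp: pderiv_eq_0_iff)
    then show False using assms(2) by (simp add: dnum_def)
  qed
  have a: "degree (pderiv p * q) \<le> degree p + degree q - 1"
  proof (cases "degree p = 0")
    case True then have "pderiv p = 0" by (simp add: pderiv_eq_0_iff)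
    then show ?thesis by simp
  next
    case False
    then show ?thesis using degree_mult_le[of "pderiv p" q] by (simp add: degree_pderiv)
  qed
  have b: "degree (p * pderiv q) \<le> degree p + degree q - 1"
  proof (cases "degree q = 0")
    case True then have "pderiv q = 0" by (simp add: pderiv_eq_0_iff)
    then show ?thesis by simp
  next
    case False
    then show ?thesis using degree_mult_le[of p "pderiv q"] by (simp add: degree_pderiv)
  qed
  have "degree (dnum p q) \<le> max (degree (pderiv p * q)) (degree (p * pderiv q))"
    unfolding dnum_def by (rule degree_diff_le_max)
  also have "\<dots> \<le> degree p + degree q - 1" using a b by simp
  finally show ?thesis using nz by linarith
qed

lemma Sy_rat:
  assumes "\<And>x. x > 0 \<Longrightarrow> poly q (of_real x) \<noteq> 0"
    and "p = 0 \<or> real (degree p) \<le> real (degree q) + m"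
  shows "Sy j m (rat p q)"
  using assms
proof (induction j arbitrary: p q m)
  case 0 then show ?case using rat_bnd by auto
next
  case (Suc j)
  have q0: "q \<noteq> 0" using Suc.prems(1)[of 1] by auto
  have d: "vector_derivative (rat p q) (at x) = rat (dnum p q) (q * q) x" if "x > 0" for x
    using rat_deriv[OF Suc.prems(1)[OF that]] by (rule vector_derivative_at)
  have deg: "dnum p q = 0 \<or> real (degree (dnum p q)) \<le> real (degree (q * q)) + (m - 1)"
  proof (cases "dnum p q = 0")
    case False
    then have "p \<noteq> 0" by (auto simp: dnum_def)
    with Suc.prems(2) have "real (degree p) \<le> real (degree q) + m" by auto
    moreover have "degree (q * q) = degree q + degree q" using q0 by (simp add: degree_mult_eq)
    ultimately show ?thesis using dnum_degree[OF q0 False] by auto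
  qed auto
  have "Sy j (m - 1) (rat (dnum p q) (q * q))"
    by (rule Suc.IH) (use Suc.prems deg in auto)
  then have "Sy j (m - 1) (\<lambda>x. vector_derivative (rat p q) (at x))"
    by (rule Sy_cong) (use d in auto)
  moreover have "rat p q differentiable (at x)" if "x > 0" for x
    using rat_deriv[OF Suc.prems(1)[OF that]] differentiableI_vector by blast
  ultimately show ?case using rat_bnd[OF Suc.prems] by auto
qed

definition cls :: "complex poly \<Rightarrow> complex poly \<Rightarrow> bool" where
  "cls p q \<longleftrightarrow> (\<forall>x\<ge>0. poly q (of_real x) \<noteq> 0) \<and> degree p + 2 \<le> degree q"

definition thp :: "complex poly \<Rightarrow> complex poly \<Rightarrow> complex poly" where
  "thp p q = pCons 0 (dnum p q)"

lemma cls_th: assumes "cls p q" shows "cls (thp p q) (q * q)"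
proof -
  have q0: "q \<noteq> 0" using assms unfolding cls_def by (metis order.refl poly_0)
  have dq: "degree (q * q) = degree q + degree q" using q0 by (simp add: degree_mult_eq)
  have "degree (thp p q) + 2 \<le> degree (q * q)"
  proof (cases "dnum p q = 0")
    case True then show ?thesis using assms dq by (simp add: thp_def cls_def)
  next
    case False
    then have "degree (thp p q) = degree (dnum p q) + 1" by (simp add: thp_def)
    then show ?thesis using dnum_degree[OF q0 False] assms dq by (simp add: cls_def)
  qed
  then show ?thesis using assms by (simp add: cls_def)
qed

lemma rat_th: "rat (thp p q) (q * q) x = of_real x * rat (dnum p q) (q * q) x"
  by (simp add: rat_def thp_def)

lemma rat_cont:
  assumes "\<And>x. x \<in> S \<Longrightarrow> poly q (of_real x) \<noteq> 0"
  shows "continuous_on S (rat p q)"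
proof (rule continuous_at_imp_continuous_on, rule ballI)
  fix x assume "x \<in> S"
  from rat_deriv[OF assms[OF this], of p UNIV] show "isCont (rat p q) x"
    using has_vector_derivative_continuous by blast
qed

lemma rat_global:
  assumes q: "\<And>x. x \<ge> 0 \<Longrightarrow> poly q (of_real x) \<noteq> 0"
    and d: "p = 0 \<or> degree p + k \<le> degree q"
  obtains C where "C \<ge> 0" "\<And>y. y \<ge> 0 \<Longrightarrow> norm (rat p q y) * (1 + y) ^ k \<le> C"
proof -
  have bb: "bnd (- real k) (rat p q)"
    by (rule rat_bnd) (use q d in auto)
  obtain C W where CW: "C \<ge> 0" "W \<ge> 1" "\<And>x. x \<ge> W \<Longrightarrow> norm (rat p q x) \<le> C * x powr (- real k)"
    using bndE'[OF bb] by metis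
  have "continuous_on {0..W} (\<lambda>y. norm (rat p q y) * (1 + y) ^ k)"
    by (intro continuous_intros rat_cont) (use q in auto)
  then obtain y0 where y0: "y0 \<in> {0..W}" "\<And>y. y \<in> {0..W} \<Longrightarrow> norm (rat p q y) * (1 + y) ^ k \<le> norm (rat p q y0) * (1 + y0) ^ k"
  proof -
    have "{0..W} \<noteq> {}" using CW(2) by auto
    from continuous_attains_sup[OF compact_Icc this \<open>continuous_on {0..W} _\<close>] show ?thesis
      using that by blast
  qed
  let ?M = "norm (rat p q y0) * (1 + y0) ^ k"
  show ?thesis
  proof (rule that[of "max ?M (C * 2 ^ k)"])
    fix y :: real assume y: "y \<ge> 0"
    show "norm (rat p q y) * (1 + y) ^ k \<le> max ?M (C * 2 ^ k)"
    proof (cases "y \<le> W")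
      case True then show ?thesis using y0(2)[of y] y by auto
    next
      case False
      then have y1: "y \<ge> 1" "y \<ge> W" using CW by auto
      have "norm (rat p q y) * (1 + y) ^ k \<le> (C * y powr (- real k)) * (2 * y) ^ k"
        using CW(3)[of y] CW(1) y1 by (intro mult_mono power_mono) auto
      also have "\<dots> = C * 2 ^ k"
        using y1 by (simp add: powr_minus powr_realpow power_mult_distrib field_simps)
      finally show ?thesis by simp
    qed
  qed (use CW(1) y0(1) in \<open>auto simp: max_def\<close>)
qed

lemma rat_global_pos:
  assumes q: "\<And>x. x \<ge> 0 \<Longrightarrow> poly q (of_real x) \<noteq> 0"
    and d: "p = 0 \<or> degree p + k \<le> degree q"
  obtains C where "C \<ge> 0" "\<And>y. y \<ge> 0 \<Longrightarrow> norm (rat p q y) \<le> C"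
    "\<And>y. y > 0 \<Longrightarrow> norm (rat p q y) \<le> C / y ^ k"
proof -
  obtain C where C: "C \<ge> 0" "\<And>y. y \<ge> 0 \<Longrightarrow> norm (rat p q y) * (1 + y) ^ k \<le> C"
    using rat_global[OF q d] by blast
  show ?thesis
  proof (rule that[of C])
    fix y :: real assume y: "y \<ge> 0"
    have "norm (rat p q y) * 1 \<le> norm (rat p q y) * (1 + y) ^ k"
      using y by (intro mult_left_mono) (auto simp: one_le_power)
    then show "norm (rat p q y) \<le> C" using C(2)[OF y] by simp
  next
    fix y :: real assume y: "y > 0"
    have "norm (rat p q y) * y ^ k \<le> norm (rat p q y) * (1 + y) ^ k"
      using y by (intro mult_left_mono power_mono) auto
    then have "norm (rat p q y) * y ^ k \<le> C" using C(2)[of y] y by simp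
    then show "norm (rat p q y) \<le> C / y ^ k" using y by (simp add: field_simps)
  qed (use C in auto)
qed

lemma mvt_bound:
  fixes g :: "real \<Rightarrow> complex"
  assumes "a \<le> b" "\<And>x. x \<in> {a..b} \<Longrightarrow> (g has_vector_derivative g' x) (at x)"
    "\<And>x. x \<in> {a..b} \<Longrightarrow> norm (g' x) \<le> B"
  shows "norm (g b - g a) \<le> B * (b - a)"
proof (cases "a = b")
  case True then show ?thesis by simp
next
  case False
  then have ab: "a < b" using assms(1) by simp
  have cont: "continuous_on {a..b} g"
    by (rule continuous_at_imp_continuous_on) (use assms(2) has_vector_derivative_continuous in blast)
  obtain x where x: "x \<in> {a<..<b}" "norm (g b - g a) \<le> norm ((b - a) *\<^sub>R g' x)"
    using mvt_general[OF ab cont, of "\<lambda>x h. h *\<^sub>R g' x"] assms(2)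
    unfolding has_vector_derivative_def by fastforce
  have "norm ((b - a) *\<^sub>R g' x) \<le> (b - a) * B"
    using assms(3)[of x] x(1) ab by (simp add: mult_left_mono)
  then show ?thesis using x(2) by (simp add: mult.commute)
qed

lemma tail_bound:
  fixes F :: "real \<Rightarrow> complex"
  assumes A: "A > 0" and cont: "continuous_on {A..} F"
    and b: "\<And>x. x \<ge> A \<Longrightarrow> norm (F x) \<le> K * x powr -3"
  shows "F integrable_on {A..}" "norm (integral {A..} F) \<le> K * A powr -2 / 2"
proof -
  have K: "K \<ge> 0"
  proof -
    have "0 \<le> K * A powr -3" using b[of A] order_trans[OF norm_ge_zero] by auto
    then show ?thesis using A by (simp add: zero_le_mult_iff)
  qed
  have pi: "((\<lambda>x. x powr -3) has_integral -(A powr (-3+1)) / (-3+1)) {A..}"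
    by (rule has_integral_powr_to_inf) (use A in auto)
  then have gi: "((\<lambda>x. K * x powr -3) has_integral K * (A powr -2 / 2)) {A..}"
    using has_integral_mult_right[OF pi, of K] by simp
  have "F absolutely_integrable_on {A..}"
    by (rule measurable_bounded_by_integrable_imp_absolutely_integrable[where g="\<lambda>x. K * x powr -3"])
       (use gi b in \<open>auto intro!: continuous_imp_measurable_on_sets_lebesgue cont\<close>)
  then show F: "F integrable_on {A..}" using set_lebesgue_integral_eq_integral(1) by blast
  have "norm (integral {A..} F) \<le> integral {A..} (\<lambda>x. K * x powr -3)"
    by (rule integral_norm_bound_integral[OF F]) (use gi b in auto)
  also have "\<dots> = K * (A powr -2 / 2)" by (rule integral_unique[OF gi])
  finally show "norm (integral {A..} F) \<le> K * A powr -2 / 2" by simp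
qed

definition Qf :: "(real \<Rightarrow> complex) \<Rightarrow> real \<Rightarrow> real \<Rightarrow> complex" where
  "Qf g w u = (g (w * (1 + u)) - g (w * (1 - u))) / complex_of_real u"

definition Tf :: "(real \<Rightarrow> complex) \<Rightarrow> real \<Rightarrow> real \<Rightarrow> complex" where
  "Tf g w t = g (w * t) / complex_of_real (t - 1)"

definition Vf :: "(real \<Rightarrow> complex) \<Rightarrow> real \<Rightarrow> complex" where
  "Vf g w = integral {0..1} (Qf g w) + integral {2..} (Tf g w)"

definition Jf :: "(real \<Rightarrow> complex) \<Rightarrow> nat \<Rightarrow> real \<Rightarrow> complex" where
  "Jf g n w = integral {1 / (real n + 2)..1} (Qf g w) + integral {2..real n + 2} (Tf g w)"

lemma cls_q: "cls p q \<Longrightarrow> x \<ge> 0 \<Longrightarrow> poly q (of_real x) \<noteq> 0"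
  by (simp add: cls_def)

lemma cls_qq: "cls p q \<Longrightarrow> x \<ge> 0 \<Longrightarrow> poly (q * q) (of_real x) \<noteq> 0"
  by (simp add: cls_def)

lemma cls_deriv: "cls p q \<Longrightarrow> y \<ge> 0 \<Longrightarrow>
    (rat p q has_vector_derivative rat (dnum p q) (q * q) y) (at y within S)"
  by (rule rat_deriv) (simp add: cls_def)

lemma cls_cont: "cls p q \<Longrightarrow> continuous_on {0..} (rat p q)"
  by (rule rat_cont) (auto simp: cls_def)

lemma cls_cont': "cls p q \<Longrightarrow> continuous_on {0..} (rat (dnum p q) (q * q))"
  by (rule rat_cont) (auto simp: cls_def)

lemma cls_bounds:
  assumes "cls p q"
  obtains B where "B \<ge> 0" "\<And>y. y \<ge> 0 \<Longrightarrow> norm (rat p q y) \<le> B"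
    "\<And>y. y > 0 \<Longrightarrow> norm (rat p q y) \<le> B / y ^ 2"
    "\<And>y. y \<ge> 0 \<Longrightarrow> norm (rat (dnum p q) (q * q) y) \<le> B"
    "\<And>y. y > 0 \<Longrightarrow> norm (rat (dnum p q) (q * q) y) \<le> B / y ^ 3"
proof -
  have q0: "q \<noteq> 0" using assms unfolding cls_def by (metis order.refl poly_0)
  obtain B1 where B1: "B1 \<ge> 0" "\<And>y. y \<ge> 0 \<Longrightarrow> norm (rat p q y) \<le> B1"
    "\<And>y. y > 0 \<Longrightarrow> norm (rat p q y) \<le> B1 / y ^ 2"
    using rat_global_pos[of q p 2] assms by (auto simp: cls_def)
  have d: "dnum p q = 0 \<or> degree (dnum p q) + 3 \<le> degree (q * q)"
  proof (cases "dnum p q = 0")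
    case False
    then show ?thesis using dnum_degree[OF q0 False] assms q0 by (auto simp: cls_def degree_mult_eq)
  qed auto
  obtain B2 where B2: "B2 \<ge> 0" "\<And>y. y \<ge> 0 \<Longrightarrow> norm (rat (dnum p q) (q * q) y) \<le> B2"
    "\<And>y. y > 0 \<Longrightarrow> norm (rat (dnum p q) (q * q) y) \<le> B2 / y ^ 3"
    using rat_global_pos[of "q * q" "dnum p q" 3] assms d by (auto simp: cls_def)
  show ?thesis
  proof (rule that[of "max B1 B2"])
    fix y :: real assume y: "y > 0"
    have "B1 / y ^ 2 \<le> max B1 B2 / y ^ 2" "B2 / y ^ 3 \<le> max B1 B2 / y ^ 3"
      using y by (auto intro!: divide_right_mono)
    then show "norm (rat p q y) \<le> max B1 B2 / y ^ 2" "norm (rat (dnum p q) (q * q) y) \<le> max B1 B2 / y ^ 3"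
      using B1(3)[OF y] B2(3)[OF y] by linarith+
  next
    fix y :: real assume y: "y \<ge> 0"
    show "norm (rat p q y) \<le> max B1 B2" using B1(2)[OF y] by linarith
    show "norm (rat (dnum p q) (q * q) y) \<le> max B1 B2" using B2(2)[OF y] by linarith
  qed (use B1 in auto)
qed

lemma Q_bound1:
  assumes c: "cls p q" and w: "w > 0" and u: "u \<in> {0..1}"
    and B: "\<And>y. y \<ge> 0 \<Longrightarrow> norm (rat (dnum p q) (q * q) y) \<le> B"
  shows "norm (Qf (rat p q) w u) \<le> 2 * w * B"
proof (cases "u = 0")
  case True
  have "0 \<le> B" using B[of 0] order_trans[OF norm_ge_zero] by auto
  then show ?thesis using True w by (simp add: Qf_def)
next
  case False
  then have u0: "u > 0" using u by auto
  have wu: "w * (1 - u) \<ge> 0" using w u by auto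
  have "norm (rat p q (w * (1 + u)) - rat p q (w * (1 - u))) \<le> B * (w * (1 + u) - w * (1 - u))"
  proof (rule mvt_bound[where g'="rat (dnum p q) (q * q)"])
    fix y assume y: "y \<in> {w * (1 - u)..w * (1 + u)}"
    then have "y \<ge> 0" using wu by auto
    then show "(rat p q has_vector_derivative rat (dnum p q) (q * q) y) (at y)"
      "norm (rat (dnum p q) (q * q) y) \<le> B"
      using cls_deriv[OF c] B by auto
  qed (use w u in auto)
  also have "\<dots> = (2 * w * B) * u" by (simp add: algebra_simps)
  finally show ?thesis using u0 by (simp add: Qf_def norm_divide divide_le_eq)
qed

lemma Q_bound2:
  assumes c: "cls p q" and w: "w \<ge> 1" and u: "u \<in> {0..1}"
    and B: "B \<ge> 0" "\<And>y. y \<ge> 0 \<Longrightarrow> norm (rat p q y) \<le> B"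
      "\<And>y. y > 0 \<Longrightarrow> norm (rat (dnum p q) (q * q) y) \<le> B / y ^ 3"
  shows "norm (Qf (rat p q) w u) \<le> 16 * B + 4 * B"
proof (cases "u = 0")
  case True
  then show ?thesis using B by (simp add: Qf_def)
next
  case False
  then have u0: "u > 0" using u by auto
  show ?thesis
  proof (cases "u \<le> 1/2")
    case True
    have "norm (rat p q (w * (1 + u)) - rat p q (w * (1 - u))) \<le> (8 * B / w ^ 3) * (w * (1 + u) - w * (1 - u))"
    proof (rule mvt_bound[where g'="rat (dnum p q) (q * q)"])
      fix y assume y: "y \<in> {w * (1 - u)..w * (1 + u)}"
      have "u * w \<le> (1/2) * w" using True w by (intro mult_right_mono) auto
      then have yw: "y \<ge> w / 2" using y by (auto simp: algebra_simps)
      then have ypos: "y > 0" using w by auto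
      show "(rat p q has_vector_derivative rat (dnum p q) (q * q) y) (at y)"
        using cls_deriv[OF c] ypos by auto
      have "(w / 2) ^ 3 \<le> y ^ 3" using yw w by (intro power_mono) auto
      then have "B / y ^ 3 \<le> B / (w / 2) ^ 3"
        using B(1) w ypos by (intro divide_left_mono) auto
      also have "\<dots> = 8 * B / w ^ 3" by (simp add: field_simps)
      finally show "norm (rat (dnum p q) (q * q) y) \<le> 8 * B / w ^ 3" using B(3)[OF ypos] by linarith
    qed (use w u in auto)
    also have "\<dots> = (16 * B / w ^ 2) * u" using w by (simp add: field_simps power3_eq_cube power2_eq_square)
    finally have "norm (Qf (rat p q) w u) \<le> 16 * B / w ^ 2"
      using u0 by (simp add: Qf_def norm_divide divide_le_eq)
    also have "\<dots> \<le> 16 * B" using w B(1) by (simp add: divide_le_eq one_le_power mult_le_cancel_left1)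
    finally show ?thesis using B(1) by simp
  next
    case False
    have "norm (rat p q (w * (1 + u)) - rat p q (w * (1 - u))) \<le> B + B"
      using B(2)[of "w * (1 + u)"] B(2)[of "w * (1 - u)"] u w norm_triangle_ineq4
      by (smt (verit) atLeastAtMost_iff mult_nonneg_nonneg)
    also have "\<dots> \<le> 4 * B * u"
    proof -
      have "B * 1 \<le> B * (2 * u)" using False B(1) by (intro mult_left_mono) auto
      then show ?thesis by (simp add: algebra_simps)
    qed
    finally have "norm (Qf (rat p q) w u) \<le> 4 * B"
      using u0 by (simp add: Qf_def norm_divide divide_le_eq mult.commute)
    then show ?thesis using B(1) by simp
  qed
qed

lemma T_bound:
  assumes c: "cls p q" and w: "w > 0" and t: "t \<ge> 2"
    and B: "\<And>y. y > 0 \<Longrightarrow> norm (rat p q y) \<le> B / y ^ 2" "B \<ge> 0"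
  shows "norm (Tf (rat p q) w t) \<le> (2 * B / w ^ 2) * t powr -3"
proof -
  have nt: "norm (complex_of_real (t - 1)) = t - 1" using t by (subst norm_of_real) simp
  have "norm (Tf (rat p q) w t) = norm (rat p q (w * t)) / (t - 1)"
    unfolding Tf_def norm_divide nt ..
  also have "\<dots> \<le> (B / (w * t) ^ 2) / (t / 2)"
    using B(1)[of "w * t"] w t B(2) by (intro frac_le) auto
  also have "\<dots> = (2 * B / w ^ 2) * t powr -3"
    using w t by (simp add: powr_minus powr_realpow field_simps power2_eq_square power3_eq_cube)
  finally show ?thesis .
qed

lemma T_cont:
  assumes c: "cls p q" and w: "w > 0" and A: "A > 1"
  shows "continuous_on {A..} (Tf (rat p q) w)"
proof -
  have "continuous_on {A..} (\<lambda>t. rat p q (w * t))"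
    by (rule continuous_on_compose2[OF cls_cont[OF c]]) (use w A in \<open>auto intro!: continuous_intros\<close>)
  then show ?thesis unfolding Tf_def[abs_def]
    by (intro continuous_intros) (use A in auto)
qed

lemma Q_cont:
  assumes c: "cls p q" and w: "w > 0"
  shows "continuous_on {0<..1} (Qf (rat p q) w)"
proof -
  have "continuous_on {0<..1} (\<lambda>u. rat p q (w * (1 + u)))"
    by (rule continuous_on_compose2[OF cls_cont[OF c]]) (use w in \<open>auto intro!: continuous_intros\<close>)
  moreover have "continuous_on {0<..1} (\<lambda>u. rat p q (w * (1 - u)))"
    by (rule continuous_on_compose2[OF cls_cont[OF c]]) (use w in \<open>auto intro!: continuous_intros\<close>)
  ultimately show ?thesis unfolding Qf_def[abs_def]
    by (intro continuous_intros) auto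
qed

lemma Q_int:
  assumes c: "cls p q" and w: "w > 0"
  shows "Qf (rat p q) w integrable_on {0..1}"
proof -
  obtain B where B: "B \<ge> 0" "\<And>y. y \<ge> 0 \<Longrightarrow> norm (rat (dnum p q) (q * q) y) \<le> B"
    using cls_bounds[OF c] by metis
  have leb: "{0<..1::real} \<in> sets lebesgue" by simp
  have "Qf (rat p q) w absolutely_integrable_on {0<..1}"
  proof (rule measurable_bounded_by_integrable_imp_absolutely_integrable[where g="\<lambda>_. 2 * w * B"])
    show "Qf (rat p q) w \<in> borel_measurable (lebesgue_on {0<..1})"
      by (rule continuous_imp_measurable_on_sets_lebesgue[OF Q_cont[OF c w] leb])
    show "(\<lambda>_. 2 * w * B) integrable_on {0<..1::real}"
      by (rule integrable_on_const, rule bounded_set_imp_lmeasurable) (auto simp: leb)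
    show "norm (Qf (rat p q) w x) \<le> 2 * w * B" if "x \<in> {0<..1}" for x
      by (rule Q_bound1[OF c w _ B(2)]) (use that in auto)
  qed (fact leb)
  then have "Qf (rat p q) w integrable_on {0<..1}"
    using set_lebesgue_integral_eq_integral(1) by blast
  then show ?thesis
    by (rule integrable_spike_set) (auto intro: negligible_subset[of "{0}"])
qed

lemma Q_split:
  assumes c: "cls p q" and w: "w > 0" and cc: "cc \<in> {0..1}"
  shows "integral {0..1} (Qf (rat p q) w) = integral {0..cc} (Qf (rat p q) w) + integral {cc..1} (Qf (rat p q) w)"
  using Henstock_Kurzweil_Integration.integral_combine[where a=0 and c=cc and b=1 and f="Qf (rat p q) w"] Q_int[OF c w] cc by auto

lemma Q_small:
  assumes c: "cls p q" and w: "w > 0" and cc: "cc \<in> {0..1}"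
    and B: "B \<ge> 0" "\<And>u. u \<in> {0..1} \<Longrightarrow> norm (Qf (rat p q) w u) \<le> B"
  shows "norm (integral {0..cc} (Qf (rat p q) w)) \<le> B * cc"
proof -
  have "Qf (rat p q) w integrable_on {0..cc}"
    by (rule integrable_on_subinterval[OF Q_int[OF c w]]) (use cc in auto)
  then have "(Qf (rat p q) w has_integral integral {0..cc} (Qf (rat p q) w)) {0..cc}"
    by (rule integrable_integral)
  from has_integral_bound_real[OF B(1) finite.emptyI this] B(2) cc show ?thesis
    by (auto simp: content_real)
qed

lemma T_int:
  assumes c: "cls p q" and w: "w > 0" and A: "A \<ge> 2"
    and B: "\<And>y. y > 0 \<Longrightarrow> norm (rat p q y) \<le> B / y ^ 2" "B \<ge> 0"
  shows "Tf (rat p q) w integrable_on {A..}"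
    "norm (integral {A..} (Tf (rat p q) w)) \<le> (2 * B / w ^ 2) * A powr -2 / 2"
  using tail_bound[of A "Tf (rat p q) w" "2 * B / w ^ 2"] T_cont[OF c w, of A] T_bound[OF c w _ B] A
  by auto

lemma T_split:
  assumes c: "cls p q" and w: "w > 0" and M: "M \<ge> 2"
  shows "integral {2..} (Tf (rat p q) w) = integral {2..M} (Tf (rat p q) w) + integral {M..} (Tf (rat p q) w)"
proof -
  obtain B where B: "B \<ge> 0" "\<And>y. y > 0 \<Longrightarrow> norm (rat p q y) \<le> B / y ^ 2"
    using cls_bounds[OF c] by metis
  have i1: "Tf (rat p q) w integrable_on {2..M}"
    by (rule integrable_continuous_interval, rule continuous_on_subset[OF T_cont[OF c w, of "3/2"]]) auto
  have i2: "Tf (rat p q) w integrable_on {M..}" using T_int[OF c w M B(2,1)] by auto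
  have "(Tf (rat p q) w has_integral (integral {2..M} (Tf (rat p q) w) + integral {M..} (Tf (rat p q) w))) ({2..M} \<union> {M..})"
    by (rule has_integral_Un[OF integrable_integral[OF i1] integrable_integral[OF i2]])
       (rule negligible_subset[of "{M}"], auto)
  moreover have "{2..M} \<union> {M..} = {2..}" using M by auto
  ultimately show ?thesis by (metis integral_unique)
qed

lemma V_bnd:
  assumes c: "cls p q"
  shows "bnd 0 (Vf (rat p q))"
proof -
  obtain B where B: "B \<ge> 0" "\<And>y. y \<ge> 0 \<Longrightarrow> norm (rat p q y) \<le> B"
    "\<And>y. y > 0 \<Longrightarrow> norm (rat p q y) \<le> B / y ^ 2"
    "\<And>y. y > 0 \<Longrightarrow> norm (rat (dnum p q) (q * q) y) \<le> B / y ^ 3"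
    using cls_bounds[OF c] by metis
  show ?thesis
  proof (rule bndI[of 1, where C="20 * B + B"])
    fix w :: real assume w: "w \<ge> 1"
    have w0: "w > 0" using w by simp
    have "norm (integral {0..1} (Qf (rat p q) w)) \<le> (16 * B + 4 * B) * 1"
      using Q_small[OF c w0, of 1 "16 * B + 4 * B"] Q_bound2[OF c w _ B(1,2,4)] B(1) by auto
    moreover have "norm (integral {2..} (Tf (rat p q) w)) \<le> B"
    proof -
      have t: "norm (integral {2..} (Tf (rat p q) w)) \<le> (2 * B / w ^ 2) * 2 powr -2 / 2"
        using T_int[OF c w0 _ B(3,1), of 2] by simp
      have a: "B / w ^ 2 \<le> B" using w B(1) by (simp add: divide_le_eq one_le_power mult_le_cancel_left1)
      have p2: "(2::real) powr -2 = 1/4" by (simp add: powr_minus powr_realpow)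
      have e: "(2 * B / w ^ 2) * 2 powr -2 / 2 = (1/4) * (B / w ^ 2)" by (simp add: p2)
      have "(1/4) * (B / w ^ 2) \<le> B" using a B(1) by linarith
      then show ?thesis using t unfolding e by linarith
    qed
    ultimately have "norm (Vf (rat p q) w) \<le> 20 * B + B"
      unfolding Vf_def using norm_triangle_ineq[of "integral {0..1} (Qf (rat p q) w)" "integral {2..} (Tf (rat p q) w)"]
      by (smt (verit))
    then show "norm (Vf (rat p q) w) \<le> (20 * B + B) * w powr 0" using w by simp
  qed
qed

lemma VJ_diff:
  assumes c: "cls p q" and w: "w > 0"
  shows "Vf (rat p q) w - Jf (rat p q) n w =
    integral {0..1 / (real n + 2)} (Qf (rat p q) w) + integral {real n + 2..} (Tf (rat p q) w)"
  unfolding Vf_def Jf_def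
  using Q_split[OF c w, of "1 / (real n + 2)"] T_split[OF c w, of "real n + 2"] by simp

lemma J_conv:
  assumes c: "cls p q" and a: "a > 0" "a \<le> b" and e: "e > 0"
  shows "\<exists>N. \<forall>n\<ge>N. \<forall>x\<in>{a..b}. norm (Jf (rat p q) n x - Vf (rat p q) x) \<le> e"
proof -
  obtain B where B: "B \<ge> 0" "\<And>y. y > 0 \<Longrightarrow> norm (rat p q y) \<le> B / y ^ 2"
    "\<And>y. y \<ge> 0 \<Longrightarrow> norm (rat (dnum p q) (q * q) y) \<le> B"
    using cls_bounds[OF c] by metis
  define K where "K = 2 * b * B + B / a ^ 2"
  have K: "K \<ge> 0" using B a by (simp add: K_def)
  obtain N :: nat where N: "K / e < real N" using reals_Archimedean2 by blast
  have bnd: "norm (Jf (rat p q) n x - Vf (rat p q) x) \<le> K / (real n + 2)" if x: "x \<in> {a..b}" for n x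
  proof -
    have x0: "x > 0" using x a by auto
    define cc where "cc = 1 / (real n + 2)"
    have cc: "cc \<in> {0..1}" by (simp add: cc_def)
    have n2: "real n + 2 \<ge> 2" by simp
    have "norm (integral {0..cc} (Qf (rat p q) x)) \<le> (2 * x * B) * cc"
      by (rule Q_small[OF c x0 cc]) (use B(1) x0 Q_bound1[OF c x0 _ B(3)] in auto)
    also have "\<dots> \<le> (2 * b * B) * cc" using x B(1) cc by (intro mult_right_mono) auto
    finally have i1: "norm (integral {0..cc} (Qf (rat p q) x)) \<le> 2 * b * B / (real n + 2)"
      by (simp add: cc_def)
    have t: "norm (integral {real n + 2..} (Tf (rat p q) x)) \<le> (2 * B / x ^ 2) * (real n + 2) powr -2 / 2"
      by (rule T_int(2)[OF c x0 n2 B(2,1)])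
    have e1: "(real n + 2) powr -2 = 1 / (real n + 2) ^ 2"
    proof -
      have "(real n + 2) powr -2 = inverse ((real n + 2) powr 2)" by (rule powr_minus)
      also have "(real n + 2) powr 2 = (real n + 2) ^ 2" by (simp add: powr_numeral)
      finally show ?thesis by (simp add: divide_inverse)
    qed
    have e2: "(2 * B / x ^ 2) * (real n + 2) powr -2 / 2 = (B / x ^ 2) * (1 / (real n + 2) ^ 2)"
      unfolding e1 by simp
    have ax: "a ^ 2 \<le> x ^ 2" using x a by (intro power_mono) auto
    have ax2: "0 < x ^ 2 * a ^ 2" using x a by simp
    have m1: "B / x ^ 2 \<le> B / a ^ 2" by (rule divide_left_mono[OF ax B(1) ax2])
    have nn: "real n + 2 \<le> (real n + 2) ^ 2" by (simp add: power2_eq_square)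
    have nn2: "0 < (real n + 2) ^ 2 * (real n + 2)" by simp
    have m2: "1 / (real n + 2) ^ 2 \<le> 1 / (real n + 2)" by (rule divide_left_mono[OF nn _ nn2]) simp
    have "(B / x ^ 2) * (1 / (real n + 2) ^ 2) \<le> (B / a ^ 2) * (1 / (real n + 2))"
      by (rule mult_mono[OF m1 m2]) (use B(1) in auto)
    then have i2: "norm (integral {real n + 2..} (Tf (rat p q) x)) \<le> (B / a ^ 2) / (real n + 2)"
      using t unfolding e2 by simp
    have "norm (Jf (rat p q) n x - Vf (rat p q) x) = norm (Vf (rat p q) x - Jf (rat p q) n x)"
      by (rule norm_minus_commute)
    also have "\<dots> \<le> norm (integral {0..cc} (Qf (rat p q) x)) + norm (integral {real n + 2..} (Tf (rat p q) x))"
      unfolding VJ_diff[OF c x0] cc_def by (rule norm_triangle_ineq)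
    also have "\<dots> \<le> K / (real n + 2)" using i1 i2 by (simp add: K_def add_divide_distrib)
    finally show ?thesis .
  qed
  show ?thesis
  proof (intro exI allI impI ballI)
    fix n x assume n: "n \<ge> N" and x: "x \<in> {a..b}"
    have a1: "real N + 1 \<le> real n + 2" using n by simp
    have a2: "0 < (real n + 2) * (real N + 1)" by simp
    have "K / (real n + 2) \<le> K / (real N + 1)" by (rule divide_left_mono[OF a1 K a2])
    also have "\<dots> \<le> e"
    proof -
      have "K < real N * e" using N e by (simp add: pos_divide_less_eq)
      then have "K \<le> (real N + 1) * e" using e by (simp add: algebra_simps)
      then show ?thesis by (simp add: divide_le_eq mult.commute)
    qed
    finally show "norm (Jf (rat p q) n x - Vf (rat p q) x) \<le> e" using bnd[OF x, of n] by linarith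
  qed
qed

lemma integral_div_c:
  fixes c :: complex
  shows "f integrable_on S \<Longrightarrow> integral S (\<lambda>t. f t / c) = integral S f / c"
  by (rule integral_unique, rule has_integral_divide, rule integrable_integral)

lemma hvd_cmul:
  "(f has_vector_derivative f') F \<Longrightarrow> ((\<lambda>x. c *\<^sub>R f x) has_vector_derivative c *\<^sub>R f') F"
  by (rule bounded_linear.has_vector_derivative[OF bounded_linear_scaleR_right])

lemma cls_th_cont: "cls p q \<Longrightarrow> continuous_on {0..} (rat (thp p q) (q * q))"
  using cls_cont[OF cls_th] .

lemma th_eq: "rat (thp p q) (q * q) y = of_real y * rat (dnum p q) (q * q) y"
  by (rule rat_th)

lemma Q_deriv:
  assumes c: "cls p q" and x: "x > 0" and t: "t \<in> {0<..1}"
  shows "((\<lambda>x. Qf (rat p q) x t) has_vector_derivative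
          Qf (rat (thp p q) (q * q)) x t / of_real x) (at x within U)"
proof -
  let ?g = "rat p q" and ?g' = "rat (dnum p q) (q * q)"
  have p1: "x * (1 + t) \<ge> 0" "x * (1 - t) \<ge> 0" using x t by auto
  have d1: "((\<lambda>x. ?g (x * (1 + t))) has_vector_derivative (1 + t) *\<^sub>R ?g' (x * (1 + t))) (at x within U)"
  proof -
    have "((\<lambda>x. x * (1 + t)) has_vector_derivative (1 + t)) (at x within U)"
      by (auto intro!: derivative_eq_intros simp: has_real_derivative_iff_has_vector_derivative[symmetric])
    from vector_diff_chain_within[OF this cls_deriv[OF c p1(1)]] show ?thesis by (simp add: o_def)
  qed
  have d2: "((\<lambda>x. ?g (x * (1 - t))) has_vector_derivative (1 - t) *\<^sub>R ?g' (x * (1 - t))) (at x within U)"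
  proof -
    have "((\<lambda>x. x * (1 - t)) has_vector_derivative (1 - t)) (at x within U)"
      by (auto intro!: derivative_eq_intros simp: has_real_derivative_iff_has_vector_derivative[symmetric])
    from vector_diff_chain_within[OF this cls_deriv[OF c p1(2)]] show ?thesis by (simp add: o_def)
  qed
  have "((\<lambda>x. (1 / t) *\<^sub>R (?g (x * (1 + t)) - ?g (x * (1 - t)))) has_vector_derivative
        (1 / t) *\<^sub>R ((1 + t) *\<^sub>R ?g' (x * (1 + t)) - (1 - t) *\<^sub>R ?g' (x * (1 - t)))) (at x within U)"
    by (intro hvd_cmul has_vector_derivative_diff d1 d2)
  moreover have "(\<lambda>x. (1 / t) *\<^sub>R (?g (x * (1 + t)) - ?g (x * (1 - t)))) = (\<lambda>x. Qf (rat p q) x t)"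
    by (simp add: Qf_def scaleR_conv_of_real divide_inverse mult.commute)
  moreover have "(1 / t) *\<^sub>R ((1 + t) *\<^sub>R ?g' (x * (1 + t)) - (1 - t) *\<^sub>R ?g' (x * (1 - t)))
      = Qf (rat (thp p q) (q * q)) x t / of_real x"
    using x t by (simp add: Qf_def th_eq scaleR_conv_of_real field_simps)
  ultimately show ?thesis by simp
qed

lemma T_deriv:
  assumes c: "cls p q" and x: "x > 0" and t: "t \<ge> 2"
  shows "((\<lambda>x. Tf (rat p q) x t) has_vector_derivative
          Tf (rat (thp p q) (q * q)) x t / of_real x) (at x within U)"
proof -
  let ?g = "rat p q" and ?g' = "rat (dnum p q) (q * q)"
  have p1: "x * t \<ge> 0" using x t by auto
  have d1: "((\<lambda>x. ?g (x * t)) has_vector_derivative t *\<^sub>R ?g' (x * t)) (at x within U)"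
  proof -
    have "((\<lambda>x. x * t) has_vector_derivative t) (at x within U)"
      by (auto intro!: derivative_eq_intros simp: has_real_derivative_iff_has_vector_derivative[symmetric])
    from vector_diff_chain_within[OF this cls_deriv[OF c p1]] show ?thesis by (simp add: o_def)
  qed
  have "((\<lambda>x. (1 / (t - 1)) *\<^sub>R ?g (x * t)) has_vector_derivative
        (1 / (t - 1)) *\<^sub>R (t *\<^sub>R ?g' (x * t))) (at x within U)"
    by (intro hvd_cmul d1)
  moreover have "(\<lambda>x. (1 / (t - 1)) *\<^sub>R ?g (x * t)) = (\<lambda>x. Tf (rat p q) x t)"
    by (simp add: Tf_def scaleR_conv_of_real divide_inverse mult.commute mult.left_commute)
  moreover have "(1 / (t - 1)) *\<^sub>R (t *\<^sub>R ?g' (x * t)) = Tf (rat (thp p q) (q * q)) x t / of_real x"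
    using x t by (simp add: Tf_def th_eq scaleR_conv_of_real field_simps)
  ultimately show ?thesis by (simp add: mult.commute)
qed

lemma th_comp_cont:
  assumes c: "cls p q" and f: "continuous_on S f" and img: "\<And>z. z \<in> S \<Longrightarrow> f z \<ge> 0"
  shows "continuous_on S (\<lambda>z. rat (thp p q) (q * q) (f z))"
  by (rule continuous_on_compose2[OF cls_th_cont[OF c] f]) (use img in auto)

lemma J_deriv:
  assumes c: "cls p q" and a: "a > 0" and x: "x \<in> {a..b}"
  shows "(Jf (rat p q) n has_vector_derivative Jf (rat (thp p q) (q * q)) n x / of_real x) (at x within {a..b})"
proof -
  let ?g = "rat p q" and ?th = "rat (thp p q) (q * q)"
  define cc where "cc = 1 / (real n + 2)"
  define M where "M = real n + 2"
  have cc: "cc > 0" "cc \<le> 1" by (auto simp: cc_def)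
  have M: "M \<ge> 2" by (simp add: M_def)
  have x0: "x > 0" using x a by auto
  have L1: "((\<lambda>x. integral (cbox cc 1) (Qf ?g x)) has_vector_derivative
      integral (cbox cc 1) (\<lambda>t. Qf ?th x t / of_real x)) (at x within {a..b})"
  proof (rule leibniz_rule_vector_derivative[where fx="\<lambda>x t. Qf ?th x t / of_real x"])
    fix y t assume y: "y \<in> {a..b}" and t: "t \<in> cbox cc 1"
    show "((\<lambda>x. Qf ?g x t) has_vector_derivative Qf ?th y t / of_real y) (at y within {a..b})"
      by (rule Q_deriv[OF c]) (use y t a cc in auto)
  next
    fix y assume y: "y \<in> {a..b}"
    show "Qf ?g y integrable_on cbox cc 1"
      unfolding cbox_interval
      by (rule integrable_continuous_interval, rule continuous_on_subset[OF Q_cont[OF c]]) (use y a cc in auto)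
  next
    have e: "(\<lambda>(x, t). Qf ?th x t / of_real x) = (\<lambda>z. (?th (fst z * (1 + snd z)) - ?th (fst z * (1 - snd z)))
               / of_real (snd z) / of_real (fst z))"
      by (auto simp: Qf_def fun_eq_iff)
    show "continuous_on ({a..b} \<times> cbox cc 1) (\<lambda>(x, t). Qf ?th x t / of_real x)"
      unfolding e
      by (intro continuous_intros th_comp_cont[OF c]) (use a cc in \<open>auto simp: cbox_interval\<close>)
  qed (use x in auto)
  have L2: "((\<lambda>x. integral (cbox 2 M) (Tf ?g x)) has_vector_derivative
      integral (cbox 2 M) (\<lambda>t. Tf ?th x t / of_real x)) (at x within {a..b})"
  proof (rule leibniz_rule_vector_derivative[where fx="\<lambda>x t. Tf ?th x t / of_real x"])
    fix y t assume y: "y \<in> {a..b}" and t: "t \<in> cbox 2 M"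
    show "((\<lambda>x. Tf ?g x t) has_vector_derivative Tf ?th y t / of_real y) (at y within {a..b})"
      by (rule T_deriv[OF c]) (use y t a in \<open>auto simp: cbox_interval\<close>)
  next
    fix y assume y: "y \<in> {a..b}"
    show "Tf ?g y integrable_on cbox 2 M"
      unfolding cbox_interval
      by (rule integrable_continuous_interval, rule continuous_on_subset[OF T_cont[OF c, of y "3/2"]]) (use y a in auto)
  next
    have e: "(\<lambda>(x, t). Tf ?th x t / of_real x) = (\<lambda>z. ?th (fst z * snd z)
               / of_real (snd z - 1) / of_real (fst z))"
      by (auto simp: Tf_def fun_eq_iff)
    show "continuous_on ({a..b} \<times> cbox 2 M) (\<lambda>(x, t). Tf ?th x t / of_real x)"
      unfolding e
      by (intro continuous_intros th_comp_cont[OF c]) (use a in \<open>auto simp: cbox_interval\<close>)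
  qed (use x in auto)
  have i1: "Qf ?th x integrable_on {cc..1}"
    by (rule integrable_continuous_interval, rule continuous_on_subset[OF Q_cont[OF cls_th[OF c] x0]]) (use cc in auto)
  have i2: "Tf ?th x integrable_on {2..M}"
    by (rule integrable_continuous_interval, rule continuous_on_subset[OF T_cont[OF cls_th[OF c] x0, of "3/2"]]) auto
  have "((\<lambda>x. integral (cbox cc 1) (Qf ?g x) + integral (cbox 2 M) (Tf ?g x)) has_vector_derivative
      integral (cbox cc 1) (\<lambda>t. Qf ?th x t / of_real x) + integral (cbox 2 M) (\<lambda>t. Tf ?th x t / of_real x))
      (at x within {a..b})"
    by (rule has_vector_derivative_add[OF L1 L2])
  moreover have "(\<lambda>x. integral (cbox cc 1) (Qf ?g x) + integral (cbox 2 M) (Tf ?g x)) = Jf ?g n"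
    by (simp add: Jf_def fun_eq_iff cbox_interval cc_def M_def)
  moreover have "integral (cbox cc 1) (\<lambda>t. Qf ?th x t / of_real x) + integral (cbox 2 M) (\<lambda>t. Tf ?th x t / of_real x)
      = Jf ?th n x / of_real x"
    unfolding cbox_interval integral_div_c[OF i1] integral_div_c[OF i2]
    by (simp add: Jf_def cc_def M_def add_divide_distrib)
  ultimately show ?thesis by simp
qed

lemma J_lim:
  assumes c: "cls p q" and x: "x > 0"
  shows "(\<lambda>n. Jf (rat p q) n x) \<longlonglongrightarrow> Vf (rat p q) x"
proof (rule LIMSEQ_I)
  fix r :: real assume r: "r > 0"
  obtain N where N: "\<forall>n\<ge>N. \<forall>y\<in>{x..x}. norm (Jf (rat p q) n y - Vf (rat p q) y) \<le> r / 2"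
    using J_conv[OF c x order.refl, of "r/2"] r by auto
  show "\<exists>no. \<forall>n\<ge>no. norm (Jf (rat p q) n x - Vf (rat p q) x) < r"
    using N r by (intro exI[of _ N]) force
qed

lemma V_deriv:
  assumes c: "cls p q" and w: "w > 0"
  shows "(Vf (rat p q) has_vector_derivative Vf (rat (thp p q) (q * q)) w / of_real w) (at w)"
proof -
  let ?g = "rat p q" and ?th = "rat (thp p q) (q * q)"
  define S where "S = {w/2..2*w}"
  have wS: "w \<in> S" using w by (auto simp: S_def)
  have a: "w / 2 > 0" "w / 2 \<le> 2 * w" using w by auto
  have derf: "(Jf ?g n has_derivative (\<lambda>h. h *\<^sub>R (Jf ?th n x / of_real x))) (at x within S)"
    if "x \<in> S" for n x
    using J_deriv[OF c a(1) that[unfolded S_def], of n] unfolding has_vector_derivative_def S_def .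
  have nle: "\<forall>\<^sub>F n in sequentially. \<forall>x\<in>S. \<forall>h. norm (h *\<^sub>R (Jf ?th n x / of_real x) - h *\<^sub>R (Vf ?th x / of_real x)) \<le> e * norm h"
    if e: "e > 0" for e
  proof -
    obtain N where N: "\<forall>n\<ge>N. \<forall>x\<in>{w/2..2*w}. norm (Jf ?th n x - Vf ?th x) \<le> e * w / 2"
      using J_conv[OF cls_th[OF c] a, of "e * w / 2"] e w by auto
    show ?thesis unfolding eventually_sequentially
    proof (intro exI allI impI ballI)
      fix n x h assume n: "n \<ge> N" and x: "x \<in> S"
      have x0: "x > 0" "x \<ge> w / 2" using x w by (auto simp: S_def)
      have eq: "norm (h *\<^sub>R (Jf ?th n x / of_real x) - h *\<^sub>R (Vf ?th x / of_real x))
          = norm h * (norm (Jf ?th n x - Vf ?th x) / x)"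
        using x0 by (simp add: scaleR_diff_right[symmetric] diff_divide_distrib[symmetric] norm_divide)
      have "norm (Jf ?th n x - Vf ?th x) / x \<le> (e * w / 2) / (w / 2)"
        using N n x x0 e w by (intro frac_le) (auto simp: S_def)
      also have "(e * w / 2) / (w / 2) = e" using w by simp
      finally have le: "norm (Jf ?th n x - Vf ?th x) / x \<le> e" .
      show "norm (h *\<^sub>R (Jf ?th n x / of_real x) - h *\<^sub>R (Vf ?th x / of_real x)) \<le> e * norm h"
        unfolding eq using mult_left_mono[OF le norm_ge_zero[of h]] by (simp add: mult.commute)
    qed
  qed
  obtain G where G: "\<forall>x\<in>S. (\<lambda>n. Jf ?g n x) \<longlonglongrightarrow> G x \<and>
      (G has_derivative (\<lambda>h. h *\<^sub>R (Vf ?th x / of_real x))) (at x within S)"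
    using has_derivative_sequence[of S "Jf ?g" "\<lambda>n x h. h *\<^sub>R (Jf ?th n x / of_real x)"
        "\<lambda>x h. h *\<^sub>R (Vf ?th x / of_real x)" w "Vf ?g w", OF _ derf nle wS J_lim[OF c w]]
    by (auto simp: S_def)
  have GV: "G x = Vf ?g x" if "x \<in> S" for x
  proof -
    have x0: "x > 0" using that w by (auto simp: S_def)
    show ?thesis using G that J_lim[OF c x0] LIMSEQ_unique by blast
  qed
  have "(G has_derivative (\<lambda>h. h *\<^sub>R (Vf ?th w / of_real w))) (at w within S)" using G wS by blast
  moreover have "at w within S = at w"
    by (rule at_within_interior) (use w in \<open>auto simp: S_def\<close>)
  ultimately have "(G has_derivative (\<lambda>h. h *\<^sub>R (Vf ?th w / of_real w))) (at w)" by simp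
  then have "(Vf ?g has_derivative (\<lambda>h. h *\<^sub>R (Vf ?th w / of_real w))) (at w)"
    by (rule has_derivative_transform_within_open[where s="{w/2<..<2*w}"])
       (use w GV in \<open>auto simp: S_def\<close>)
  then show ?thesis unfolding has_vector_derivative_def .
qed

lemma subst_lin:
  fixes F :: "real \<Rightarrow> complex"
  assumes m: "m > 0" and F: "(F has_integral i) {A..B}"
  shows "((\<lambda>x. F (x / m + c)) has_integral (of_real m * i)) {m * (A - c)..m * (B - c)}"
proof -
  have "((\<lambda>x. F ((1 / m) *\<^sub>R x + c)) has_integral (i /\<^sub>R (1 / m) ^ DIM(real)))
           (cbox ((A - c) /\<^sub>R (1 / m)) ((B - c) /\<^sub>R (1 / m)))"
    by (rule has_integral_affinity') (use F m in \<open>auto simp: cbox_interval\<close>)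
  moreover have "(\<lambda>x. F ((1 / m) *\<^sub>R x + c)) = (\<lambda>x. F (x / m + c))" by (simp add: divide_inverse mult.commute)
  moreover have "i /\<^sub>R (1 / m) ^ DIM(real) = of_real m * i" by (simp add: scaleR_conv_of_real)
  moreover have "cbox ((A - c) /\<^sub>R (1 / m)) ((B - c) /\<^sub>R (1 / m)) = {m * (A - c)..m * (B - c)}"
    by (simp add: cbox_interval mult.commute)
  ultimately show ?thesis by simp
qed

lemma piece2:
  fixes g :: "real \<Rightarrow> complex"
  assumes w: "w > 0" and d: "d > 0" "d \<le> 1"
    and F: "((\<lambda>u. g (w * (1 + u)) / of_real u) has_integral i) {d..1}"
  shows "((\<lambda>x. g x / of_real (x - w)) has_integral i) {w * d + w..2 * w}"
proof -
  have h0: "((\<lambda>x. g (w * (1 + (x / w + -1))) / of_real (x / w + -1)) has_integral (of_real w * i))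
          {w * (d - -1)..w * (1 - -1)}"
    by (rule subst_lin[OF w F])
  have eqI: "{w * (d - -1)..w * (1 - -1)} = {w * d + w..2 * w}" by (simp add: algebra_simps)
  have h: "((\<lambda>x. g (w * (1 + (x / w + -1))) / of_real (x / w + -1)) has_integral (of_real w * i))
          {w * d + w..2 * w}" using h0 unfolding eqI .
  have "((\<lambda>x. of_real w * (g x / of_real (x - w))) has_integral (of_real w * i)) {w * d + w..2 * w}"
  proof (rule has_integral_eq[OF _ h])
    fix x assume x: "x \<in> {w * d + w..2 * w}"
    moreover have "w * d > 0" using w d by simp
    ultimately have xw: "x - w \<noteq> 0" by auto
    have "complex_of_real (x / w + -1) = of_real (x - w) / of_real w"
      using w by (simp add: field_simps)
    then show "g (w * (1 + (x / w + -1))) / of_real (x / w + -1) = of_real w * (g x / of_real (x - w))"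
      using w xw by (simp add: field_simps)
  qed
  then have "((\<lambda>x. g x / of_real (x - w)) has_integral (of_real w * i) / of_real w) {w * d + w..2 * w}"
    by (subst (asm) has_integral_mult_right_iff) (use w in auto)
  then show ?thesis using w by simp
qed

lemma piece1:
  fixes g :: "real \<Rightarrow> complex"
  assumes w: "w > 0" and d: "d > 0" "d \<le> 1"
    and F: "((\<lambda>u. g (w * (1 - u)) / of_real u) has_integral i) {d..1}"
  shows "((\<lambda>x. g x / of_real (x - w)) has_integral -i) {0..w - w * d}"
proof -
  have G: "((\<lambda>v. g (w * (1 - - v)) / of_real (- v)) has_integral i) {-1..-d}"
    using F by (subst has_integral_reflect_real[symmetric]) simp
  have h0: "((\<lambda>x. g (w * (1 - - (x / w + -1))) / of_real (- (x / w + -1))) has_integral (of_real w * i))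
          {w * (-1 - -1)..w * (-d - -1)}"
    by (rule subst_lin[OF w G])
  have eqI: "{w * (-1 - -1)..w * (-d - -1)} = {0..w - w * d}" by (simp add: algebra_simps)
  have h: "((\<lambda>x. g (w * (1 - - (x / w + -1))) / of_real (- (x / w + -1))) has_integral (of_real w * i))
          {0..w - w * d}" using h0 unfolding eqI .
  have "((\<lambda>x. of_real (- w) * (g x / of_real (x - w))) has_integral (of_real w * i)) {0..w - w * d}"
  proof (rule has_integral_eq[OF _ h])
    fix x assume x: "x \<in> {0..w - w * d}"
    moreover have "w * d > 0" using w d by simp
    ultimately have xw: "x - w \<noteq> 0" by auto
    have "complex_of_real (- (x / w + -1)) = - of_real (x - w) / of_real w"
      using w by (simp add: field_simps)
    then show "g (w * (1 - - (x / w + -1))) / of_real (- (x / w + -1)) = of_real (- w) * (g x / of_real (x - w))"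
      using w xw by (simp add: field_simps)
  qed
  then have "((\<lambda>x. g x / of_real (x - w)) has_integral (of_real w * i) / of_real (- w)) {0..w - w * d}"
    by (subst (asm) has_integral_mult_right_iff) (use w in auto)
  then show ?thesis using w by simp
qed

lemma piece3:
  fixes g :: "real \<Rightarrow> complex"
  assumes w: "w > 0" and M: "M \<ge> 2"
    and F: "(Tf g w has_integral i) {2..M}"
  shows "((\<lambda>x. g x / of_real (x - w)) has_integral i) {2 * w..w * M}"
proof -
  have h0: "((\<lambda>x. Tf g w (x / w + 0)) has_integral (of_real w * i)) {w * (2 - 0)..w * (M - 0)}"
    by (rule subst_lin[OF w F])
  have eqI: "{w * (2 - 0)..w * (M - 0)} = {2 * w..w * M}" by (simp add: algebra_simps)
  have h: "((\<lambda>x. Tf g w (x / w + 0)) has_integral (of_real w * i)) {2 * w..w * M}" using h0 unfolding eqI .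
  have "((\<lambda>x. of_real w * (g x / of_real (x - w))) has_integral (of_real w * i)) {2 * w..w * M}"
  proof (rule has_integral_eq[OF _ h])
    fix x assume x: "x \<in> {2 * w..w * M}"
    then have xw: "x - w \<noteq> 0" using w by auto
    have "complex_of_real (x / w + 0 - 1) = of_real (x - w) / of_real w"
      using w by (simp add: field_simps)
    then show "Tf g w (x / w + 0) = of_real w * (g x / of_real (x - w))"
      using w xw by (simp add: Tf_def field_simps)
  qed
  then have "((\<lambda>x. g x / of_real (x - w)) has_integral (of_real w * i) / of_real w) {2 * w..w * M}"
    by (subst (asm) has_integral_mult_right_iff) (use w in auto)
  then show ?thesis using w by simp
qed

lemma f_tail:
  assumes c: "cls p q" and w: "w > 0" and A: "A \<ge> 2 * w"
    and B: "B \<ge> 0" "\<And>y. y > 0 \<Longrightarrow> norm (rat p q y) \<le> B / y ^ 2"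
  shows "(\<lambda>x. rat p q x / of_real (x - w)) integrable_on {A..}"
    "norm (integral {A..} (\<lambda>x. rat p q x / of_real (x - w))) \<le> (2 * B) * A powr -2 / 2"
proof -
  have A0: "A > 0" using w A by simp
  have cont: "continuous_on {A..} (\<lambda>x. rat p q x / of_real (x - w))"
    by (intro continuous_intros continuous_on_subset[OF cls_cont[OF c]]) (use w A in auto)
  have b: "norm (rat p q x / of_real (x - w)) \<le> (2 * B) * x powr -3" if x: "x \<ge> A" for x
  proof -
    have x0: "x > 0" "x - w \<ge> x / 2" using x A w by auto
    have nt: "norm (complex_of_real (x - w)) = x - w" using x0 by (subst norm_of_real) simp
    have "norm (rat p q x / of_real (x - w)) = norm (rat p q x) / (x - w)"
      unfolding norm_divide nt ..
    also have "\<dots> \<le> (B / x ^ 2) / (x / 2)"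
      using B(2)[OF x0(1)] x0 B(1) by (intro frac_le) auto
    also have "\<dots> = (2 * B) * x powr -3"
      using x0 by (simp add: powr_minus powr_realpow field_simps power2_eq_square power3_eq_cube)
    finally show ?thesis .
  qed
  show "(\<lambda>x. rat p q x / of_real (x - w)) integrable_on {A..}"
    "norm (integral {A..} (\<lambda>x. rat p q x / of_real (x - w))) \<le> (2 * B) * A powr -2 / 2"
    using tail_bound[OF A0 cont b] by auto
qed

lemma I_eq:
  assumes c: "cls p q" and w: "w > 0" and e: "e > 0" "e < w" and M: "M \<ge> 2"
  shows "integral ({0<..<w - e} \<union> {w + e<..}) (\<lambda>x. rat p q x / of_real (x - w))
    = Vf (rat p q) w - integral {0..e / w} (Qf (rat p q) w) - integral {M..} (Tf (rat p q) w)
      + integral {w * M..} (\<lambda>x. rat p q x / of_real (x - w))"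
proof -
  let ?g = "rat p q"
  let ?f = "\<lambda>x. rat p q x / of_real (x - w)"
  define d where "d = e / w"
  have d: "d > 0" "d < 1" "w * d = e" using w e by (auto simp: d_def)
  obtain B where B: "B \<ge> 0" "\<And>y. y > 0 \<Longrightarrow> norm (rat p q y) \<le> B / y ^ 2"
    using cls_bounds[OF c] by metis
  have cp: "continuous_on {d..1} (\<lambda>u. ?g (w * (1 + u)) / of_real u)"
    by (intro continuous_intros continuous_on_compose2[OF cls_cont[OF c]]) (use w d in auto)
  have cm: "continuous_on {d..1} (\<lambda>u. ?g (w * (1 - u)) / of_real u)"
    by (intro continuous_intros continuous_on_compose2[OF cls_cont[OF c]]) (use w d in auto)
  define ip where "ip = integral {d..1} (\<lambda>u. ?g (w * (1 + u)) / of_real u)"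
  define im where "im = integral {d..1} (\<lambda>u. ?g (w * (1 - u)) / of_real u)"
  have ipi: "((\<lambda>u. ?g (w * (1 + u)) / of_real u) has_integral ip) {d..1}"
    unfolding ip_def by (rule integrable_integral, rule integrable_continuous_interval[OF cp])
  have imi: "((\<lambda>u. ?g (w * (1 - u)) / of_real u) has_integral im) {d..1}"
    unfolding im_def by (rule integrable_integral, rule integrable_continuous_interval[OF cm])
  define it where "it = integral {2..M} (Tf ?g w)"
  have iti: "(Tf ?g w has_integral it) {2..M}"
    unfolding it_def
    by (rule integrable_integral, rule integrable_continuous_interval,
        rule continuous_on_subset[OF T_cont[OF c w, of "3/2"]]) auto
  define i4 where "i4 = integral {w * M..} ?f"
  have i4i: "(?f has_integral i4) {w * M..}"
    unfolding i4_def using f_tail(1)[OF c w _ B] M w by (intro integrable_integral) auto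
  have h1: "(?f has_integral -im) {0..w - e}" using piece1[OF w d(1) _ imi] d by simp
  have h2: "(?f has_integral ip) {w + e..2 * w}" using piece2[OF w d(1) _ ipi] d by (simp add: add.commute)
  have h3: "(?f has_integral it) {2 * w..w * M}" using piece3[OF w M iti] .
  have wM: "w * M \<ge> w * 2" using w M by (intro mult_left_mono) auto
  have u1: "{w + e..w * M} \<union> {w * M..} = {w + e..}"
    unfolding set_eq_iff atLeastAtMost_iff atLeast_iff Un_iff using e wM by (intro allI) (smt (verit))
  have h23: "(?f has_integral ip + it) {w + e..w * M}"
    by (rule has_integral_combine[OF _ _ h2 h3]) (use e w wM in auto)
  have h234: "(?f has_integral (ip + it) + i4) ({w + e..w * M} \<union> {w * M..})"
    by (rule has_integral_Un[OF h23 i4i]) (rule negligible_subset[of "{w * M}"], auto)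
  have hall: "(?f has_integral -im + ((ip + it) + i4)) ({0..w - e} \<union> {w + e..})"
    by (rule has_integral_Un[OF h1 h234[unfolded u1]]) (use e in auto)
  have "integral ({0<..<w - e} \<union> {w + e<..}) ?f = integral ({0..w - e} \<union> {w + e..}) ?f"
    by (rule integral_spike_set) (auto intro: negligible_subset[of "{0, w - e, w + e}"])
  also have "\<dots> = -im + ((ip + it) + i4)" by (rule integral_unique[OF hall])
  finally have L: "integral ({0<..<w - e} \<union> {w + e<..}) ?f = -im + ((ip + it) + i4)" .
  have Qeq: "integral {d..1} (Qf ?g w) = ip - im"
  proof -
    have "Qf ?g w = (\<lambda>u. ?g (w * (1 + u)) / of_real u - ?g (w * (1 - u)) / of_real u)"
      by (simp add: Qf_def fun_eq_iff diff_divide_distrib)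
    then show ?thesis
      using integral_diff[OF has_integral_integrable[OF ipi] has_integral_integrable[OF imi]]
      by (simp add: ip_def im_def)
  qed
  have V: "Vf ?g w = integral {0..d} (Qf ?g w) + (ip - im) + (it + integral {M..} (Tf ?g w))"
  proof -
    have qs: "integral {0..1} (Qf ?g w) = integral {0..d} (Qf ?g w) + integral {d..1} (Qf ?g w)"
      by (rule Q_split[OF c w]) (use d in auto)
    show ?thesis unfolding Vf_def qs Qeq T_split[OF c w M] it_def by simp
  qed
  show ?thesis unfolding L V d_def[symmetric] i4_def[symmetric] by simp
qed

lemma powr_m2: "(x::real) > 0 \<Longrightarrow> x powr -2 = 1 / x ^ 2"
proof -
  assume x: "x > 0"
  have "x powr -2 = inverse (x powr 2)" by (rule powr_minus)
  also have "x powr 2 = x ^ 2" using x by (simp add: powr_numeral)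
  finally show ?thesis by (simp add: divide_inverse)
qed

lemma I_close:
  assumes c: "cls p q" and w: "w > 0" and e: "e > 0" "e < w"
    and B: "B \<ge> 0" "\<And>y. y > 0 \<Longrightarrow> norm (rat p q y) \<le> B / y ^ 2"
      "\<And>y. y \<ge> 0 \<Longrightarrow> norm (rat (dnum p q) (q * q) y) \<le> B"
  shows "norm (integral ({0<..<w - e} \<union> {w + e<..}) (\<lambda>x. rat p q x / of_real (x - w)) - Vf (rat p q) w)
     \<le> 2 * B * e"
proof -
  let ?I = "integral ({0<..<w - e} \<union> {w + e<..}) (\<lambda>x. rat p q x / of_real (x - w))"
  let ?d = "norm (?I - Vf (rat p q) w)"
  have d: "e / w \<in> {0..1}" using e w by auto
  have q1: "norm (integral {0..e / w} (Qf (rat p q) w)) \<le> (2 * w * B) * (e / w)"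
    by (rule Q_small[OF c w d]) (use B w Q_bound1[OF c w _ B(3)] in auto)
  have q1': "(2 * w * B) * (e / w) = 2 * B * e" using w by simp
  have main: "?d \<le> 2 * B * e + 2 * (B / w ^ 2) / M" if M: "M \<ge> 2" for M
  proof -
    have M0: "M > 0" using M by simp
    have wM: "w * M \<ge> 2 * w" using w M by simp
    have t1: "norm (integral {M..} (Tf (rat p q) w)) \<le> (2 * B / w ^ 2) * M powr -2 / 2"
      by (rule T_int(2)[OF c w M B(2,1)])
    have t2: "norm (integral {w * M..} (\<lambda>x. rat p q x / of_real (x - w))) \<le> (2 * B) * (w * M) powr -2 / 2"
      by (rule f_tail(2)[OF c w wM B(1,2)])
    have e1: "(2 * B / w ^ 2) * M powr -2 / 2 = (B / w ^ 2) * (1 / M ^ 2)" using M0 by (simp add: powr_m2)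
    have e2: "(2 * B) * (w * M) powr -2 / 2 = (B / w ^ 2) * (1 / M ^ 2)"
      using M0 w by (simp add: powr_m2 power_mult_distrib)
    have mm: "1 / M ^ 2 \<le> 1 / M"
      using M by (intro divide_left_mono) (auto simp: power2_eq_square)
    have bw: "B / w ^ 2 \<ge> 0" using B(1) by simp
    have t: "(B / w ^ 2) * (1 / M ^ 2) \<le> (B / w ^ 2) * (1 / M)" by (rule mult_left_mono[OF mm bw])
    have "?I - Vf (rat p q) w = - integral {0..e / w} (Qf (rat p q) w) - integral {M..} (Tf (rat p q) w)
      + integral {w * M..} (\<lambda>x. rat p q x / of_real (x - w))"
      unfolding I_eq[OF c w e M] by simp
    then have "?d \<le> norm (integral {0..e / w} (Qf (rat p q) w)) + norm (integral {M..} (Tf (rat p q) w))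
      + norm (integral {w * M..} (\<lambda>x. rat p q x / of_real (x - w)))"
      by (smt (verit) norm_minus_cancel norm_triangle_ineq4 norm_triangle_ineq)
    also have "\<dots> \<le> 2 * B * e + (B / w ^ 2) * (1 / M) + (B / w ^ 2) * (1 / M)"
      using q1 q1' t1 t2 e1 e2 t by linarith
    finally show ?thesis by (simp add: mult.commute)
  qed
  define D where "D = ?d"
  define X where "X = 2 * (B / w ^ 2)"
  have main': "D \<le> 2 * B * e + X / M" if "M \<ge> 2" for M using main[OF that] by (simp add: D_def X_def)
  show ?thesis unfolding D_def[symmetric]
  proof (rule ccontr)
    assume "\<not> D \<le> 2 * B * e"
    then have pos: "D - 2 * B * e > 0" by simp
    obtain n :: nat where n: "X / (D - 2 * B * e) < real n"
      using reals_Archimedean2 by blast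
    define M where "M = real n + 2"
    have M: "M \<ge> 2" "M > 0" by (auto simp: M_def)
    have "X < real n * (D - 2 * B * e)"
      using n pos by (simp add: pos_divide_less_eq)
    also have "\<dots> \<le> M * (D - 2 * B * e)" using pos by (intro mult_right_mono) (auto simp: M_def)
    finally have "X / M < D - 2 * B * e" using M by (simp add: divide_less_eq mult.commute)
    with main'[OF M(1)] show False by linarith
  qed
qed

lemma pv_eq:
  assumes c: "cls p q" and w: "w > 0"
  shows "pv_integral (rat p q) w = Vf (rat p q) w"
proof -
  obtain B where B: "B \<ge> 0" "\<And>y. y > 0 \<Longrightarrow> norm (rat p q y) \<le> B / y ^ 2"
      "\<And>y. y \<ge> 0 \<Longrightarrow> norm (rat (dnum p q) (q * q) y) \<le> B"
    using cls_bounds[OF c] by metis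
  let ?I = "\<lambda>e. integral ({0<..<w - e} \<union> {w + e<..}) (\<lambda>x. rat p q x / of_real (x - w))"
  have "(?I \<longlongrightarrow> Vf (rat p q) w) (at_right 0)"
  proof (rule tendstoI)
    fix r :: real assume r: "r > 0"
    show "eventually (\<lambda>e. dist (?I e) (Vf (rat p q) w) < r) (at_right 0)"
      unfolding eventually_at_right_field
    proof (intro exI conjI allI impI)
      show "min w (r / (2 * B + 1)) > 0" using w r B by simp
      fix e :: real assume e0: "e > 0" and e: "e < min w (r / (2 * B + 1))"
      have "dist (?I e) (Vf (rat p q) w) \<le> 2 * B * e"
        unfolding dist_norm by (rule I_close[OF c w e0 _ B]) (use e in auto)
      also have "\<dots> < r"
      proof -
        have "e * (2 * B + 1) < r" using e B by (simp add: less_divide_eq)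
        then show ?thesis using e0 by (simp add: algebra_simps)
      qed
      finally show "dist (?I e) (Vf (rat p q) w) < r" .
    qed
  qed
  then show ?thesis unfolding pv_integral_def by (intro tendsto_Lim) auto
qed

lemma Sy_inv: "Sy j (-1) (\<lambda>x. complex_of_real (1 / x))"
proof -
  have "Sy j (-1) (rat [:1:] [:0, 1:])"
    using Sy_rat[of "[:0, 1:]" "[:1:]" "-1" j] by simp
  moreover have "rat [:1:] [:0, 1:] x = complex_of_real (1 / x)" for x
    unfolding rat_def by simp
  ultimately show ?thesis by (rule Sy_cong)
qed

lemma Sy_V: "cls p q \<Longrightarrow> Sy j 0 (Vf (rat p q))"
proof (induction j arbitrary: p q)
  case 0 then show ?case using V_bnd by simp
next
  case (Suc j)
  have IH: "Sy j 0 (Vf (rat (thp p q) (q * q)))" using Suc.IH[OF cls_th[OF Suc.prems]] .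
  have "Sy j (-1 + 0) (\<lambda>x. complex_of_real (1 / x) * Vf (rat (thp p q) (q * q)) x)"
    by (rule Sy_bilinear[OF Sy_inv IH bounded_bilinear_mult])
  then have "Sy j (-1) (\<lambda>x. complex_of_real (1 / x) * Vf (rat (thp p q) (q * q)) x)" by simp
  then have "Sy j (-1) (\<lambda>x. vector_derivative (Vf (rat p q)) (at x))"
  proof (rule Sy_cong)
    fix x :: real assume x: "x > 0"
    show "complex_of_real (1 / x) * Vf (rat (thp p q) (q * q)) x = vector_derivative (Vf (rat p q)) (at x)"
      using vector_derivative_at[OF V_deriv[OF Suc.prems x]] by (simp add: divide_inverse mult.commute)
  qed
  moreover have "Vf (rat p q) differentiable (at x)" if "x > 0" for x
    using V_deriv[OF Suc.prems that] differentiableI_vector by blast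
  ultimately show ?case using V_bnd[OF Suc.prems] by simp
qed

lemma pv_cong:
  assumes "\<And>x. x > 0 \<Longrightarrow> f x = g x" "w > 0"
  shows "pv_integral f w = pv_integral g w"
proof -
  have "eventually (\<lambda>e. integral ({0<..<w - e} \<union> {w + e<..}) (\<lambda>x. f x / complex_of_real (x - w)) =
        integral ({0<..<w - e} \<union> {w + e<..}) (\<lambda>x. g x / complex_of_real (x - w))) (at_right 0)"
    unfolding eventually_at_right_field
  proof (intro exI[of _ 1] conjI allI impI)
    fix e :: real assume e: "e > 0"
    show "integral ({0<..<w - e} \<union> {w + e<..}) (\<lambda>x. f x / complex_of_real (x - w)) =
        integral ({0<..<w - e} \<union> {w + e<..}) (\<lambda>x. g x / complex_of_real (x - w))"
      by (rule integral_cong) (use assms e in auto)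
  qed simp
  then show ?thesis unfolding pv_integral_def by (rule Lim_cong) simp
qed

lemma Sy_pv:
  assumes c: "cls p q" and h: "\<And>x. x > 0 \<Longrightarrow> h x = rat p q x"
  shows "Sy j 0 (pv_integral h)"
  by (rule Sy_cong[OF Sy_V[OF c]]) (use pv_eq[OF c] pv_cong[OF h] in auto)

lemma norm_vec_le_sum: "norm (x :: 'a::real_normed_vector ^ 'n) \<le> (\<Sum>i\<in>UNIV. norm (x $ i))"
  unfolding norm_vec_def by (rule L2_set_le_sum) simp

lemma mat_entry_le: "norm ((A :: complex ^'n ^'m) $ i $ j) \<le> norm A"
  using Finite_Cartesian_Product.norm_nth_le[where x="A $ i" and i=j] Finite_Cartesian_Product.norm_nth_le[where x=A and i=i] by linarith

lemma matmul_norm: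
  fixes A :: "complex ^'n ^'m" and B :: "complex ^'k ^'n"
  shows "norm (A ** B) \<le> norm A * norm B * (real CARD('m) * real CARD('k) * real CARD('n))"
proof -
  have e: "norm ((A ** B) $ i $ j) \<le> real CARD('n) * (norm A * norm B)" for i j
  proof -
    have "norm ((A ** B) $ i $ j) = norm (\<Sum>k\<in>UNIV. A $ i $ k * B $ k $ j)"
      by (simp add: matrix_matrix_mult_def)
    also have "\<dots> \<le> (\<Sum>k\<in>(UNIV::'n set). norm (A $ i $ k * B $ k $ j))" by (rule norm_sum)
    also have "\<dots> \<le> (\<Sum>k\<in>(UNIV::'n set). norm A * norm B)"
      by (rule sum_mono) (simp add: norm_mult mult_mono mat_entry_le)
    finally show ?thesis by simp
  qed
  have "norm (A ** B) \<le> (\<Sum>i\<in>UNIV. norm ((A ** B) $ i))" by (rule norm_vec_le_sum)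
  also have "\<dots> \<le> (\<Sum>i\<in>(UNIV::'m set). \<Sum>j\<in>(UNIV::'k set). norm ((A ** B) $ i $ j))"
    by (rule sum_mono) (rule norm_vec_le_sum)
  also have "\<dots> \<le> (\<Sum>i\<in>(UNIV::'m set). \<Sum>j\<in>(UNIV::'k set). real CARD('n) * (norm A * norm B))"
    by (intro sum_mono e)
  also have "\<dots> = norm A * norm B * (real CARD('m) * real CARD('k) * real CARD('n))"
    by (simp add: algebra_simps)
  finally show ?thesis .
qed

lemma bb_matmul: "bounded_bilinear (\<lambda>(A :: complex ^'n ^'m) (B :: complex ^'k ^'n). A ** B)"
proof (rule bounded_bilinear.intro)
  fix a a' :: "complex ^'n ^'m" and b b' :: "complex ^'k ^'n" and r :: real
  show "(a + a') ** b = a ** b + a' ** b"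
    by (simp add: matrix_matrix_mult_def vec_eq_iff distrib_right sum.distrib)
  show "a ** (b + b') = a ** b + a ** b'" by (rule matrix_add_ldistrib)
  show "(r *\<^sub>R a) ** b = r *\<^sub>R (a ** b)"
    by (simp add: matrix_matrix_mult_def vec_eq_iff scaleR_sum_right)
  show "a ** (r *\<^sub>R b) = r *\<^sub>R (a ** b)"
    by (simp add: matrix_matrix_mult_def vec_eq_iff scaleR_sum_right)
next
  show "\<exists>K. \<forall>(a :: complex ^'n ^'m) (b :: complex ^'k ^'n). norm (a ** b) \<le> norm a * norm b * K"
    using matmul_norm by blast
qed

definition emb :: "'n \<Rightarrow> 'n \<Rightarrow> complex \<Rightarrow> complex ^'n ^'n" where
  "emb a b c = (\<chi> i k. if i = a \<and> k = b then c else 0)"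

lemma bl_emb: "bounded_linear (emb a b)"
proof (rule bounded_linear_intro[where K=1])
  fix x y :: complex and r :: real
  show "emb a b (x + y) = emb a b x + emb a b y" by (simp add: emb_def vec_eq_iff)
  show "emb a b (r *\<^sub>R x) = r *\<^sub>R emb a b x" by (simp add: emb_def vec_eq_iff)
  have "norm (emb a b x) \<le> (\<Sum>i\<in>UNIV. norm (emb a b x $ i))" by (rule norm_vec_le_sum)
  also have "\<dots> \<le> (\<Sum>i\<in>UNIV. \<Sum>k\<in>UNIV. norm (emb a b x $ i $ k))"
    by (rule sum_mono) (rule norm_vec_le_sum)
  also have "\<dots> = (\<Sum>i\<in>UNIV. \<Sum>k\<in>UNIV. if i = a \<and> k = b then norm x else 0)"
    by (intro sum.cong) (auto simp: emb_def)
  also have "\<dots> = norm x"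
  proof -
    have r: "(\<Sum>k\<in>UNIV. if i = a \<and> k = b then norm x else 0) = (if i = a then norm x else 0)" for i
      by (cases "i = a") (simp_all add: sum.delta)
    show ?thesis by (simp add: r sum.delta)
  qed
  finally show "norm (emb a b x) \<le> norm x * 1" by simp
qed

lemma mat_as_sum: "(\<chi> i k. F i k) = (\<Sum>a\<in>UNIV. \<Sum>b\<in>UNIV. emb a b (F a b))"
proof -
  have r: "(\<Sum>b\<in>UNIV. if i = a \<and> k = b then F a b else 0) = (if i = a then F a k else 0)" for i k a
    by (cases "i = a") (simp_all add: sum.delta)
  show ?thesis by (simp add: vec_eq_iff emb_def r sum.delta)
qed

lemma Sy_mat:
  fixes F :: "'n::finite \<Rightarrow> 'n \<Rightarrow> real \<Rightarrow> complex"
  assumes "\<And>a b. Sy j m (F a b)"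
  shows "Sy j m (\<lambda>w. \<chi> i k. F i k w)"
proof -
  have "Sy j m (\<lambda>w. \<Sum>a\<in>UNIV. \<Sum>b\<in>UNIV. emb a b (F a b w))"
    by (intro Sy_sum Sy_linear[OF assms bl_emb]) simp_all
  then show ?thesis by (simp add: mat_as_sum[symmetric])
qed

lemma vd_quot_iff:
  fixes f :: "real \<Rightarrow> 'a::real_normed_vector"
  shows "(f has_vector_derivative D) (at x) \<longleftrightarrow> ((\<lambda>y. (f y - f x) /\<^sub>R (y - x)) \<longlongrightarrow> D) (at x)"
proof -
  have bl: "bounded_linear (\<lambda>h::real. h *\<^sub>R D)" by (rule bounded_linear_scaleR_left)
  have eq: "eventually (\<lambda>h. norm (f (x + h) - f x - h *\<^sub>R D) / norm h = norm ((f (x + h) - f x) /\<^sub>R h - D)) (at 0)"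
  proof -
    have "eventually (\<lambda>h::real. h \<noteq> 0) (at 0)" by (simp add: eventually_at_filter)
    then show ?thesis
    proof eventually_elim
      case (elim h)
      have "(1 / h) *\<^sub>R (f (x + h) - f x - h *\<^sub>R D) = (1 / h) *\<^sub>R (f (x + h) - f x) - ((1 / h) * h) *\<^sub>R D"
        by (simp add: scaleR_diff_right)
      also have "\<dots> = (f (x + h) - f x) /\<^sub>R h - D" using elim by (simp add: divide_inverse)
      finally have "(f (x + h) - f x) /\<^sub>R h - D = (1 / h) *\<^sub>R (f (x + h) - f x - h *\<^sub>R D)" by simp
      then show ?case using elim by (simp add: divide_inverse mult.commute)
    qed
  qed
  have "(f has_vector_derivative D) (at x) \<longleftrightarrow> ((\<lambda>h. norm (f (x + h) - f x - h *\<^sub>R D) / norm h) \<longlongrightarrow> 0) (at 0)"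
    unfolding has_vector_derivative_def has_derivative_at using bl by simp
  also have "\<dots> \<longleftrightarrow> ((\<lambda>h. norm ((f (x + h) - f x) /\<^sub>R h - D)) \<longlongrightarrow> 0) (at 0)"
    by (rule tendsto_cong[OF eq])
  also have "\<dots> \<longleftrightarrow> ((\<lambda>h. (f (x + h) - f x) /\<^sub>R h) \<longlongrightarrow> D) (at 0)"
    by (simp add: tendsto_norm_zero_iff LIM_zero_iff)
  also have "\<dots> \<longleftrightarrow> ((\<lambda>y. (f y - f x) /\<^sub>R (y - x)) \<longlongrightarrow> D) (at x)"
    by (simp add: LIM_offset_zero_iff)
  finally show ?thesis .
qed

lemma inv_props:
  fixes M :: "complex ^'n ^'n"
  assumes "det M \<noteq> 0"
  shows "M ** matrix_inv M = mat 1" "matrix_inv M ** M = mat 1"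
proof -
  have "invertible M" using assms invertible_det_nz by blast
  then have "\<exists>M'. M ** M' = mat 1 \<and> M' ** M = mat 1" unfolding invertible_def by blast
  then have "M ** matrix_inv M = mat 1 \<and> matrix_inv M ** M = mat 1"
    unfolding matrix_inv_def by (rule someI_ex)
  then show "M ** matrix_inv M = mat 1" "matrix_inv M ** M = mat 1" by auto
qed

lemma inv_diff:
  fixes A R :: "real \<Rightarrow> complex ^'n ^'n"
  assumes "A x ** R x = mat 1" "R y ** A y = mat 1"
  shows "R y - R x = - (R y ** (A y - A x) ** R x)"
proof -
  have "R y ** (A y - A x) ** R x = (R y ** A y - R y ** A x) ** R x"
    by (simp add: bounded_bilinear.diff_right[OF bb_matmul])
  also have "\<dots> = R y ** A y ** R x - R y ** A x ** R x"
    by (simp add: bounded_bilinear.diff_left[OF bb_matmul])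
  also have "\<dots> = R x - R y"
    using assms by (simp add: matrix_mul_assoc[symmetric] matrix_mul_rid matrix_mul_lid)
  finally show ?thesis by simp
qed

lemma inv_deriv:
  fixes A R :: "real \<Rightarrow> complex ^'n ^'n"
  assumes inv: "\<And>y. y > 0 \<Longrightarrow> A y ** R y = mat 1 \<and> R y ** A y = mat 1"
    and x: "x > 0" and dA: "(A has_vector_derivative A') (at x)"
  shows "(R has_vector_derivative - (R x ** A' ** R x)) (at x)"
proof -
  interpret bb: bounded_bilinear "\<lambda>(a :: complex ^'n ^'n) (b :: complex ^'n ^'n). a ** b"
    by (rule bb_matmul)
  from bb.pos_bounded obtain K where K0: "\<forall>(a :: complex ^'n ^'n) (b :: complex ^'n ^'n). norm (a ** b) \<le> norm a * norm b * K" "K > 0"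
    by blast
  have K: "\<And>(a :: complex ^'n ^'n) (b :: complex ^'n ^'n). norm (a ** b) \<le> norm a * norm b * K" "K > 0"
    using K0 by auto
  have Acont: "(A \<longlongrightarrow> A x) (at x)"
    using has_vector_derivative_continuous[OF dA] by (simp add: continuous_at)
  have evpos: "eventually (\<lambda>y. y > 0) (at x)"
    using x by (simp add: eventually_at_topological) (metis greaterThan_iff open_greaterThan)
  define c where "c = K * K * norm (R x) + 1"
  have c0: "K * K * norm (R x) \<ge> 0" using K(2) by simp
  have c: "c > 0" unfolding c_def using c0 by linarith
  have "eventually (\<lambda>y. dist (A y) (A x) < 1 / (2 * c)) (at x)"
    using tendstoD[OF Acont] c by simp
  then have evb: "eventually (\<lambda>y. norm (R y - R x) \<le> (2 * K * K * norm (R x) * norm (R x)) * norm (A y - A x)) (at x)"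
    using evpos
  proof eventually_elim
    case (elim y)
    have d: "R y - R x = - (R y ** (A y - A x) ** R x)"
      by (rule inv_diff) (use inv x elim in auto)
    have n1: "norm (R y - R x) \<le> norm (R y) * norm (A y - A x) * norm (R x) * (K * K)"
    proof -
      have "norm (R y - R x) = norm (R y ** (A y - A x) ** R x)" unfolding d by simp
      also have "\<dots> \<le> norm (R y ** (A y - A x)) * norm (R x) * K" by (rule K)
      also have "\<dots> \<le> (norm (R y) * norm (A y - A x) * K) * norm (R x) * K"
        using K by (intro mult_right_mono) auto
      finally show ?thesis by (simp add: algebra_simps)
    qed
    have small: "norm (A y - A x) * (K * K * norm (R x)) \<le> 1 / 2"
    proof -
      have "norm (A y - A x) < 1 / (2 * c)" using elim by (simp add: dist_norm)
      then have "norm (A y - A x) * c \<le> 1 / 2" using c by (simp add: less_divide_eq)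
      moreover have "norm (A y - A x) * (K * K * norm (R x)) \<le> norm (A y - A x) * c"
        by (intro mult_left_mono) (auto simp: c_def)
      ultimately show ?thesis by linarith
    qed
    have "norm (R y) \<le> norm (R x) + norm (R y - R x)" by (metis norm_triangle_sub add.commute)
    also have "norm (R y - R x) \<le> norm (R y) * (norm (A y - A x) * (K * K * norm (R x)))"
      using n1 by (simp add: algebra_simps)
    also have "\<dots> \<le> norm (R y) * (1 / 2)" by (intro mult_left_mono small) simp
    finally have Ry: "norm (R y) \<le> 2 * norm (R x)" by simp
    have "norm (R y - R x) \<le> norm (R y) * (norm (A y - A x) * norm (R x) * (K * K))"
      using n1 by (simp add: algebra_simps)
    also have "\<dots> \<le> (2 * norm (R x)) * (norm (A y - A x) * norm (R x) * (K * K))"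
      by (intro mult_right_mono Ry) (use K in auto)
    finally show ?case by (simp add: algebra_simps)
  qed
  have "((\<lambda>y. R y - R x) \<longlongrightarrow> 0) (at x)"
  proof (rule Lim_null_comparison[OF evb])
    have "((\<lambda>y. A y - A x) \<longlongrightarrow> 0) (at x)" using Acont by (simp add: LIM_zero_iff)
    then have "((\<lambda>y. norm (A y - A x)) \<longlongrightarrow> 0) (at x)" by (simp add: tendsto_norm_zero_iff)
    then show "((\<lambda>y. (2 * K * K * norm (R x) * norm (R x)) * norm (A y - A x)) \<longlongrightarrow> 0) (at x)"
      by (rule tendsto_mult_right_zero)
  qed
  then have Rcont: "(R \<longlongrightarrow> R x) (at x)" by (simp add: LIM_zero_iff)
  have qA: "((\<lambda>y. (A y - A x) /\<^sub>R (y - x)) \<longlongrightarrow> A') (at x)" using dA vd_quot_iff by blast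
  have L: "((\<lambda>y. - (R y ** ((A y - A x) /\<^sub>R (y - x)) ** R x)) \<longlongrightarrow> - (R x ** A' ** R x)) (at x)"
    by (intro tendsto_minus bb.tendsto Rcont qA tendsto_const)
  have E: "eventually (\<lambda>y. - (R y ** ((A y - A x) /\<^sub>R (y - x)) ** R x) = (R y - R x) /\<^sub>R (y - x)) (at x)"
    using evpos
  proof eventually_elim
    case (elim y)
    have d: "R y - R x = - (R y ** (A y - A x) ** R x)"
      by (rule inv_diff) (use inv x elim in auto)
    show ?case unfolding d by (simp add: bb.scaleR_left bb.scaleR_right)
  qed
  have "((\<lambda>y. (R y - R x) /\<^sub>R (y - x)) \<longlongrightarrow> - (R x ** A' ** R x)) (at x)"
    using L tendsto_cong[OF E] by simp
  then show ?thesis using vd_quot_iff by blast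
qed

lemma mul_mat_scalar: "(M :: complex ^'n ^'n) ** mat (complex_of_real x) = x *\<^sub>R M"
proof -
  have r: "(\<Sum>k\<in>UNIV. M $ i $ k * (if k = j then c else 0)) = M $ i $ j * c" for i j and c :: complex
    by (simp add: if_distrib sum.delta cong: if_cong)
  have c: "(x *\<^sub>R M) $ i $ j = complex_of_real x * M $ i $ j" for i j
    by (simp only: vector_scaleR_component) (simp add: scaleR_conv_of_real)
  show ?thesis by (simp add: vec_eq_iff matrix_matrix_mult_def mat_def r mult.commute) (simp add: scaleR_conv_of_real)
qed

lemma mat_of_real: "mat (complex_of_real x) = x *\<^sub>R (mat 1 :: complex ^'n ^'n)"
proof -
  have c: "(x *\<^sub>R (mat 1 :: complex ^'n ^'n)) $ i $ j = complex_of_real x * (mat 1 :: complex ^'n ^'n) $ i $ j" for i j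
    by (simp only: vector_scaleR_component) (simp add: scaleR_conv_of_real)
  show ?thesis by (simp add: vec_eq_iff mat_def) (simp add: scaleR_conv_of_real)
qed

lemma R_bnd:
  fixes G R :: "real \<Rightarrow> complex ^'n ^'n"
  assumes G: "bnd 0 G" and inv: "\<And>x. x > 0 \<Longrightarrow> R x ** (G x - mat (complex_of_real x)) = mat 1"
  shows "bnd (-1) R"
proof -
  interpret bb: bounded_bilinear "\<lambda>(a :: complex ^'n ^'n) (b :: complex ^'n ^'n). a ** b"
    by (rule bb_matmul)
  from bb.pos_bounded obtain K where K0: "\<forall>(a :: complex ^'n ^'n) (b :: complex ^'n ^'n). norm (a ** b) \<le> norm a * norm b * K" "K > 0"
    by blast
  obtain C W where CW: "C \<ge> 0" "W \<ge> 1" "\<And>x. x \<ge> W \<Longrightarrow> norm (G x) \<le> C * x powr 0"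
    using bndE'[OF G] by metis
  let ?I = "norm (mat 1 :: complex ^'n ^'n)"
  show ?thesis
  proof (rule bndI[of "max W (2 * K * C + 1)", where C="2 * ?I"])
    fix x assume x: "x \<ge> max W (2 * K * C + 1)"
    have x1: "x \<ge> 1" "x \<ge> W" "x \<ge> 2 * K * C" using x CW by auto
    have Gx: "norm (G x) \<le> C" using CW(3)[of x] x1 by simp
    have "R x ** G x - x *\<^sub>R R x = mat 1"
      using inv[of x] x1 by (simp add: bb.diff_right mul_mat_scalar)
    then have e: "x *\<^sub>R R x = R x ** G x - mat 1" by (simp add: algebra_simps)
    have "x * norm (R x) = norm (x *\<^sub>R R x)" using x1 by simp
    also have "\<dots> \<le> norm (R x ** G x) + ?I" unfolding e by (rule norm_triangle_ineq4)
    also have "norm (R x ** G x) \<le> norm (R x) * norm (G x) * K" using K0 by blast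
    also have "\<dots> \<le> norm (R x) * C * K" using Gx K0 by (intro mult_right_mono mult_left_mono) auto
    finally have "x * norm (R x) \<le> norm (R x) * (K * C) + ?I" by (simp add: algebra_simps)
    moreover have "norm (R x) * (K * C) \<le> norm (R x) * (x / 2)" using x1 by (intro mult_left_mono) auto
    ultimately have "(x / 2) * norm (R x) \<le> ?I" by (simp add: algebra_simps)
    then have "norm (R x) \<le> 2 * ?I / x" using x1 by (simp add: field_simps)
    then show "norm (R x) \<le> 2 * ?I * x powr -1" using x1 by (simp add: powr_minus divide_inverse)
  qed
qed

lemma nth_vderiv_shift: "nth_vderiv k (\<lambda>x. vector_derivative F (at x)) = nth_vderiv (Suc k) F"
  by (induction k) auto

lemma Sy_nth: "Sy j m F \<Longrightarrow>
   (\<forall>k<j. \<forall>x>0. (nth_vderiv k F has_vector_derivative nth_vderiv (Suc k) F x) (at x))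
   \<and> bnd (m - real j) (nth_vderiv j F)"
proof (induction j arbitrary: m F)
  case 0 then show ?case by simp
next
  case (Suc j)
  let ?F' = "\<lambda>x. vector_derivative F (at x)"
  have S: "bnd m F" "\<And>x. x > 0 \<Longrightarrow> F differentiable (at x)" "Sy j (m - 1) ?F'" using Suc.prems by auto
  have IH: "(\<forall>k<j. \<forall>x>0. (nth_vderiv k ?F' has_vector_derivative nth_vderiv (Suc k) ?F' x) (at x))
      \<and> bnd (m - 1 - real j) (nth_vderiv j ?F')" using Suc.IH[OF S(3)] .
  have part1: "\<forall>k<Suc j. \<forall>x>0. (nth_vderiv k F has_vector_derivative nth_vderiv (Suc k) F x) (at x)"
  proof (intro allI impI)
    fix k x assume k: "k < Suc j" and x: "(x::real) > 0"
    show "(nth_vderiv k F has_vector_derivative nth_vderiv (Suc k) F x) (at x)"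
    proof (cases k)
      case 0
      then show ?thesis using S(2)[OF x] by (simp add: vector_derivative_works)
    next
      case (Suc k')
      then have "k' < j" using k by simp
      then have "(nth_vderiv k' ?F' has_vector_derivative nth_vderiv (Suc k') ?F' x) (at x)"
        using IH x by blast
      then show ?thesis unfolding Suc nth_vderiv_shift .
    qed
  qed
  have "bnd (m - 1 - real j) (nth_vderiv (Suc j) F)" using IH by (simp only: nth_vderiv_shift)
  then have "bnd (m - real (Suc j)) (nth_vderiv (Suc j) F)" by (simp add: algebra_simps)
  with part1 show ?case by blast
qed

theorem lemma2:
  fixes om :: "'n::{finite,linorder} \<Rightarrow> real"
    and lam :: real
    and v :: "'n \<Rightarrow> real \<Rightarrow> complex"
    and pol rho :: "'n \<Rightarrow> 'n \<Rightarrow> complex poly"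
    and s :: real
    and r :: nat
  assumes om_mono: "mono om"
    and v_L2: "\<And>n. (\<lambda>x. (cmod (v n x))^2) integrable_on {0<..}"
    and ff: "\<And>m n x. x > 0 \<Longrightarrow>
               cnj (v m x) * v n x = poly (pol m n) (complex_of_real x) / poly (rho m n) (complex_of_real x)"
    and deg: "\<And>m n. degree (rho m n) \<ge> degree (pol m n) + 2"
    and rho_nz: "\<And>m n x. x \<ge> 0 \<Longrightarrow> poly (rho m n) (complex_of_real x) \<noteq> 0"
    and pol0: "\<And>m n. poly (pol m n) 0 = 0"
    and s: "s = 1 \<or> s = -1"
    and det_nz: "\<And>w. w > 0 \<Longrightarrow> det (Kpm s om lam v w - mat (complex_of_real w)) \<noteq> 0"
  shows "(\<forall>k<r. \<forall>x>0. (nth_vderiv k (Rpm s om lam v) has_vector_derivative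
                         nth_vderiv (Suc k) (Rpm s om lam v) x) (at x))
       \<and> (\<exists>C W. \<forall>x\<ge>W. norm (nth_vderiv r (Rpm s om lam v) x) \<le> C * x powr (- real r - 1))"
proof -
  define K where "K = Kpm s om lam v"
  define A where "A = (\<lambda>w. K w - mat (complex_of_real w))"
  define R where "R = Rpm s om lam v"
  have R_def': "R = (\<lambda>w. matrix_inv (A w))" by (simp add: R_def A_def K_def Rpm_def[abs_def])
  have cls: "cls (pol m n) (rho m n)" for m n
    using rho_nz deg by (simp add: cls_def)
  define h where "h = (\<lambda>m n x. cnj (v m x) * v n x)"
  have h_rat: "h m n x = rat (pol m n) (rho m n) x" if "x > 0" for m n x
    using ff[OF that] by (simp add: h_def rat_def)
  have Sy_h: "Sy j 0 (h m n)" for j m n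
  proof -
    have "Sy j 0 (rat (pol m n) (rho m n))"
    proof (rule Sy_rat)
      show "\<And>x. 0 < x \<Longrightarrow> poly (rho m n) (complex_of_real x) \<noteq> 0" using rho_nz by simp
      have "degree (pol m n) \<le> degree (rho m n)" using deg[of m n] by simp
      then show "pol m n = 0 \<or> real (degree (pol m n)) \<le> real (degree (rho m n)) + 0" by simp
    qed
    then show ?thesis by (rule Sy_cong) (use h_rat in auto)
  qed
  have Sy_pvh: "Sy j 0 (\<lambda>w. pv_integral (h m n) w)" for j m n
    using Sy_pv[OF cls, of "h m n" m n j] h_rat by auto
  define c1 where "c1 = complex_of_real (lam\<^sup>2)"
  define c2 where "c2 = complex_of_real s * \<i> * complex_of_real (pi * lam\<^sup>2)"
  have K_eq: "K w = (\<chi> m n. (if m = n then complex_of_real (om m) else 0)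
      + (- c1) * pv_integral (h m n) w + (- c2) * h m n w)" for w
    by (simp add: K_def Kpm_def Dmat_def Gam_def h_def c1_def c2_def vec_eq_iff)
  have SyK: "Sy j 0 K" for j
  proof -
    have "Sy j 0 (\<lambda>w. \<chi> m n. (if m = n then complex_of_real (om m) else 0)
      + (- c1) * pv_integral (h m n) w + (- c2) * h m n w)"
    proof (rule Sy_mat)
      fix m n
      have a: "Sy j 0 (\<lambda>w. (- c1) * pv_integral (h m n) w)"
        by (rule Sy_linear[OF Sy_pvh bounded_linear_mult_right])
      have b: "Sy j 0 (\<lambda>w. (- c2) * h m n w)"
        by (rule Sy_linear[OF Sy_h bounded_linear_mult_right])
      show "Sy j 0 (\<lambda>w. (if m = n then complex_of_real (om m) else 0)
        + (- c1) * pv_integral (h m n) w + (- c2) * h m n w)"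
        by (rule Sy_add[OF Sy_add[OF Sy_const a] b])
    qed
    then show ?thesis by (rule Sy_cong) (simp add: K_eq)
  qed
  have SyA: "Sy j 1 A" for j
  proof -
    have a: "Sy j 1 K" using Sy_mono[OF SyK] by simp
    have b: "Sy j 1 (\<lambda>w. - (w *\<^sub>R (mat 1 :: complex ^'n::{finite,linorder} ^'n::{finite,linorder})))"
      by (rule Sy_linear[OF Sy_id]) (intro bounded_linear_minus bounded_linear_scaleR_left)
    have "Sy j 1 (\<lambda>w. K w + - (w *\<^sub>R (mat 1 :: complex ^'n::{finite,linorder} ^'n::{finite,linorder})))" by (rule Sy_add[OF a b])
    then show ?thesis by (rule Sy_cong) (simp add: A_def mat_of_real)
  qed
  have inv: "A y ** R y = mat 1 \<and> R y ** A y = mat 1" if "y > 0" for y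
    using inv_props[OF det_nz[OF that]] by (simp add: R_def' A_def K_def)
  let ?A' = "\<lambda>x. vector_derivative A (at x)"
  have dA: "(A has_vector_derivative ?A' x) (at x)" if "x > 0" for x
    using SyA[of 1] that by (simp add: vector_derivative_works[symmetric])
  have SyA': "Sy j 0 ?A'" for j using SyA[of "Suc j"] by simp
  have dR: "(R has_vector_derivative - (R x ** ?A' x ** R x)) (at x)" if "x > 0" for x
    by (rule inv_deriv[OF inv that dA[OF that]]) auto
  have bR: "bnd (-1) R"
  proof (rule R_bnd[where G=K])
    show "bnd 0 K" using SyK[of 0] by simp
    fix x :: real assume "x > 0"
    then show "R x ** (K x - mat (complex_of_real x)) = mat 1" using inv by (simp add: A_def)
  qed
  have SyR: "Sy j (-1) R" for j
  proof (induction j)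
    case 0 then show ?case using bR by simp
  next
    case (Suc j)
    have p1: "Sy j (-1 + 0) (\<lambda>x. R x ** ?A' x)"
      by (rule Sy_bilinear[OF Suc.IH SyA' bb_matmul])
    have p2: "Sy j (-1 + 0 + -1) (\<lambda>x. R x ** ?A' x ** R x)"
      by (rule Sy_bilinear[OF p1 Suc.IH bb_matmul])
    have p3: "Sy j (-1 + 0 + -1) (\<lambda>x. - (R x ** ?A' x ** R x))"
      by (rule Sy_linear[OF p2 bounded_linear_minus[OF bounded_linear_ident]])
    have e: "(-1 + 0 + -1 :: real) = -1 - 1" by simp
    have "Sy j (-1 - 1) (\<lambda>x. vector_derivative R (at x))"
      using p3 unfolding e
    proof (rule Sy_cong)
      fix x :: real assume "x > 0"
      then show "- (R x ** ?A' x ** R x) = vector_derivative R (at x)"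
        using dR vector_derivative_at by metis
    qed
    moreover have "R differentiable (at x)" if "x > 0" for x
      using dR[OF that] differentiableI_vector by blast
    ultimately show ?case using bR by simp
  qed
  from Sy_nth[OF SyR[of r]] have
    "(\<forall>k<r. \<forall>x>0. (nth_vderiv k R has_vector_derivative nth_vderiv (Suc k) R x) (at x))
     \<and> bnd (-1 - real r) (nth_vderiv r R)" .
  moreover have "(-1 - real r) = - real r - 1" by simp
  ultimately show ?thesis unfolding R_def bnd_def by metis
qed


end
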